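(* Fix $a\in(0,\tfrac12)$ and $E\in[0,1]$. Suppose there exist $\lambda_1<\lambda_2<0$ such that the $\Theta$-flow described in the context has corridors $\mathcal K_1(E,\lambda_1)$ and $\mathcal K_1(E,\lambda_2)$ with $w(\mathcal K_1(E,\lambda_2))=0$ and $w(\mathcal K_1(E,\lambda_1))\ge1$. Then there is $\lambda\in(\lambda_1,\lambda_2)$ such that the $\Theta$-flow with parameters $(E,\lambda)$ has a saddles connector going from $(0,0)$ to $(\pi,-\pi)$.
   Context: For $a\in(0,\tfrac12)$, $E\in[0,1]$, $\lambda\in\mathbb R$, the $\Theta$-flow is the system on the strip $[0,\pi]\times\mathbb R$ (with $\Theta$ understood mod $2\pi$ on the cylinder) $$\dot\theta=\sin\theta,\qquad \dot\Theta=-2a\sin\theta\cos\theta\cos\Theta+2aE\sin^2\theta\sin\Theta-\sin\Theta+2\lambda\sin\theta.$$ Its equilibria are $(0,0)$, $(0,\pi)$ (left) and $(\pi,-\pi)$, $(\pi,0)$ (right), mod $2\pi$ in $\Theta$. Let $\widetilde{\mathcal W}^-$ be the unique orbit in $(0,\pi)\times\mathbb R$ with $\alpha$-limit $(0,0)$ and $\widetilde{\mathcal W}^+$ the unique orbit with $\omega$-limit $(\pi,-\pi)$. A saddles connector from $(0,0)$ to $(\pi,-\pi)$ is an orbit with $\alpha$-limit $(0,0)$ and $\omega$-limit $(\pi,-\pi)$. The flow has a corridor $\mathcal K_1(E,\lambda)$ of winding number $k\in\mathbb Z$ if $\widetilde{\mathcal W}^-\neq\widetilde{\mathcal W}^+$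 and the $\omega$-limit of $\widetilde{\mathcal W}^-$ is $(\pi,-2\pi k)$. *)

theory Defs
  imports "HOL-Analysis.Analysis"
begin

definition theta_field :: "real \<Rightarrow> real \<Rightarrow> real \<Rightarrow> real \<times> real \<Rightarrow> real \<times> real" where
  "theta_field a E lam p =
     (let th = fst p; Th = snd p in
      (sin th,
       - 2 * a * sin th * cos th * cos Th + 2 * a * E * (sin th)^2 * sin Th
       - sin Th + 2 * lam * sin th))"

definition strip_solution :: "real \<Rightarrow> real \<Rightarrow> real \<Rightarrow> (real \<Rightarrow> real \<times> real) \<Rightarrow> bool" where
  "strip_solution a E lam \<gamma> \<longleftrightarrow>
     (\<forall>t. (\<gamma> has_vector_derivative theta_field a E lam (\<gamma> t)) (at t)) \<and>
     (\<forall>t. 0 < fst (\<gamma> t) \<and> fst (\<gamma> t) < pi)"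

definition alpha_limit_is :: "(real \<Rightarrow> real \<times> real) \<Rightarrow> real \<times> real \<Rightarrow> bool" where
  "alpha_limit_is \<gamma> p \<longleftrightarrow> (\<gamma> \<longlongrightarrow> p) at_bot"

definition omega_limit_is :: "(real \<Rightarrow> real \<times> real) \<Rightarrow> real \<times> real \<Rightarrow> bool" where
  "omega_limit_is \<gamma> p \<longleftrightarrow> (\<gamma> \<longlongrightarrow> p) at_top"

definition W_minus :: "real \<Rightarrow> real \<Rightarrow> real \<Rightarrow> (real \<times> real) set" where
  "W_minus a E lam = (THE S. \<exists>\<gamma>. strip_solution a E lam \<gamma> \<and> alpha_limit_is \<gamma> (0,0) \<and> S = range \<gamma>)"

definition W_plus :: "real \<Rightarrow> real \<Rightarrow> real \<Rightarrow> (real \<times> real) set" where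
  "W_plus a E lam = (THE S. \<exists>\<gamma>. strip_solution a E lam \<gamma> \<and> omega_limit_is \<gamma> (pi,-pi) \<and> S = range \<gamma>)"

text \<open>The flow has a corridor K_1(E,lam) of winding number k.\<close>
definition has_corridor :: "real \<Rightarrow> real \<Rightarrow> real \<Rightarrow> int \<Rightarrow> bool" where
  "has_corridor a E lam k \<longleftrightarrow>
     W_minus a E lam \<noteq> W_plus a E lam \<and>
     (\<exists>\<gamma>. strip_solution a E lam \<gamma> \<and> range \<gamma> = W_minus a E lam \<and>
          omega_limit_is \<gamma> (pi, - 2 * pi * of_int k))"

definition saddles_connector :: "real \<Rightarrow> real \<Rightarrow> real \<Rightarrow> bool" where
  "saddles_connector a E lam \<longleftrightarrow>
     (\<exists>\<gamma>. strip_solution a E lam \<gamma> \<and> alpha_limit_is \<gamma> (0,0) \<and> omega_limit_is \<gamma> (pi,-pi))"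

end

theory Submission
  imports Defs
begin

definition th0 :: "real \<Rightarrow> real" where "th0 t = 2 * arctan (exp t)"

lemma th0_sin: "sin (th0 t) = 2 * exp t / (1 + (exp t)^2)"
proof -
  have q: "sqrt (1 + (exp t)\<^sup>2) * sqrt (1 + (exp t)\<^sup>2) = 1 + (exp t)^2"
    by (simp add: add_pos_nonneg)
  have "sin (th0 t) = 2 * sin (arctan (exp t)) * cos (arctan (exp t))"
    unfolding th0_def by (rule sin_double)
  also have "\<dots> = 2 * exp t / (sqrt (1 + (exp t)\<^sup>2) * sqrt (1 + (exp t)\<^sup>2))"
    by (simp add: sin_arctan cos_arctan)
  finally show ?thesis using q by simp
qed

lemma sin_th0_pos: "0 < sin (th0 t)"
  by (simp add: th0_sin add_pos_nonneg)

lemma sin_th0_le: "sin (th0 t) \<le> 2 * exp t"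
proof -
  have "2 * exp t / (1 + (exp t)^2) \<le> 2 * exp t / 1"
    by (rule divide_left_mono) (auto simp: add_pos_nonneg)
  thus ?thesis by (simp add: th0_sin)
qed

lemma sin_th0_le': "sin (th0 t) \<le> 2 * exp (- t)"
proof -
  have e: "exp (-t) = 1 / exp t" by (simp add: exp_minus field_simps)
  have "2 * exp t / (1 + (exp t)^2) \<le> 2 / exp t"
    by (simp add: field_simps add_pos_nonneg power2_eq_square)
  thus ?thesis by (simp add: th0_sin e)
qed

lemma th0_bounds: "0 < th0 t" "th0 t < pi"
  using arctan_bounded[of "exp t"] by (auto simp: th0_def)

lemma th0_deriv: "(th0 has_real_derivative sin (th0 t)) (at t)"
proof -
  have "((\<lambda>t. 2 * arctan (exp t)) has_real_derivative 2 * (inverse (1 + (exp t)\<^sup>2) * exp t)) (at t)"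
    by (intro derivative_eq_intros DERIV_arctan[THEN DERIV_chain2]) auto
  moreover have "2 * (inverse (1 + (exp t)\<^sup>2) * exp t) = sin (th0 t)"
    by (simp add: th0_sin field_simps)
  ultimately show ?thesis unfolding th0_def[abs_def] by simp
qed

lemma th0_inj: "th0 s = th0 t \<Longrightarrow> s = t"
  by (simp add: th0_def arctan_eq_iff)

lemma th0_bot: "(th0 \<longlongrightarrow> 0) at_bot"
proof -
  have "((\<lambda>t. 2 * arctan (exp t)) \<longlongrightarrow> 2 * arctan 0) at_bot"
    by (intro tendsto_intros exp_at_bot)
  thus ?thesis by (simp add: th0_def[abs_def])
qed

lemma th0_top: "(th0 \<longlongrightarrow> pi) at_top"
proof -
  have "((\<lambda>t. 2 * arctan (exp t)) \<longlongrightarrow> 2 * (pi/2)) at_top"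
    by (intro tendsto_intros filterlim_compose[OF tendsto_arctan_at_top exp_at_top])
  thus ?thesis by (simp add: th0_def[abs_def])
qed

lemma th0_cont: "continuous_on S th0"
  unfolding th0_def[abs_def] by (intro continuous_intros)

definition Gf :: "real \<Rightarrow> real \<Rightarrow> real \<Rightarrow> real \<Rightarrow> real \<Rightarrow> real" where
  "Gf a E lam t y = - 2 * a * sin (th0 t) * cos (th0 t) * cos y
     + 2 * a * E * (sin (th0 t))^2 * sin y - sin y + 2 * lam * sin (th0 t)"

lemma theta_field_th0: "theta_field a E lam (th0 t, y) = (sin (th0 t), Gf a E lam t y)"
  by (simp add: theta_field_def Gf_def Let_def)

lemma Gf_cont: "continuous_on S f \<Longrightarrow> continuous_on S (\<lambda>r. Gf a E lam r (f r))"
  unfolding Gf_def th0_def by (intro continuous_intros)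

lemma Gf_lam: "Gf a E mu t y - Gf a E lam t y = 2 * (mu - lam) * sin (th0 t)"
  by (simp add: Gf_def algebra_simps)

lemma cos_lip: "\<bar>cos (y::real) - cos z\<bar> \<le> \<bar>y - z\<bar>"
proof -
  have "\<bar>cos y - cos z\<bar> = 2 * \<bar>sin ((y + z) / 2)\<bar> * \<bar>sin ((z - y) / 2)\<bar>"
    by (simp add: cos_diff_cos abs_mult)
  also have "\<dots> \<le> 2 * 1 * \<bar>(z - y) / 2\<bar>"
    by (intro mult_mono abs_sin_x_le_abs_x) auto
  finally show ?thesis by simp
qed

lemma sin_lip: "\<bar>sin (y::real) - sin z\<bar> \<le> \<bar>y - z\<bar>"
proof -
  have "\<bar>sin y - sin z\<bar> = 2 * \<bar>sin ((y - z) / 2)\<bar> * \<bar>cos ((y + z) / 2)\<bar>"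
    by (simp add: sin_diff_sin abs_mult)
  also have "\<dots> \<le> 2 * \<bar>(y - z) / 2\<bar> * 1"
    by (intro mult_mono abs_sin_x_le_abs_x) auto
  finally show ?thesis by simp
qed

lemma sin_mono_half: assumes "-1 \<le> (v::real)" "v \<le> u" "u \<le> 1" shows "(u - v)/2 \<le> sin u - sin v"
proof (cases "v = u")
  case False
  hence "v < u" using assms by simp
  from MVT2[OF this, of sin cos] obtain z where z: "v < z" "z < u" "sin u - sin v = (u - v) * cos z"
    by (auto intro: DERIV_sin)
  have "cos 1 \<le> cos \<bar>z\<bar>"
    using z assms by (intro cos_monotone_0_pi_le) (auto simp: pi_gt3 intro: order_trans[OF _ pi_gt3[THEN less_imp_le]])
  moreover have "1/2 < cos (1::real)"
  proof -
    have "cos (pi/3) < cos 1" using pi_gt3 by (intro cos_monotone_0_pi) auto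
    thus ?thesis by (simp add: cos_60)
  qed
  ultimately have "1/2 \<le> cos z" by simp
  thus ?thesis using z \<open>v < u\<close> by (simp add: mult_left_mono[of "1/2" "cos z" "u - v", simplified])
qed simp

context
  fixes a E :: real
  assumes aE: "0 < a" "a < 1/2" "0 \<le> E" "E \<le> 1"
begin

lemma aE_bounds: "0 \<le> 2*a" "2*a \<le> 1" "0 \<le> 2*a*E" "2*a*E \<le> 1"
  using aE by (auto intro: mult_le_one[of "2*a" E, simplified] simp: mult_nonneg_nonneg)

lemma prod_le1: "\<bar>x\<bar> \<le> 1 \<Longrightarrow> \<bar>y\<bar> \<le> 1 \<Longrightarrow> \<bar>x * y\<bar> \<le> (1::real)"
  by (simp add: abs_mult mult_le_one)

lemma Gf_near: "\<bar>Gf a E lam t y + sin y\<bar> \<le> (2 + 2*\<bar>lam\<bar>) * sin (th0 t)"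
proof -
  define s where "s = sin (th0 t)"
  have s: "0 < s" "s \<le> 1" using sin_th0_pos by (auto simp: s_def)
  have e: "Gf a E lam t y + sin y = s * (-(2*a) * cos (th0 t) * cos y + (2*a*E) * s * sin y + 2*lam)"
    by (simp add: Gf_def s_def algebra_simps power2_eq_square)
  have b1: "\<bar>(2*a) * cos (th0 t) * cos y\<bar> \<le> 1"
    using aE_bounds by (simp add: abs_mult mult_le_one)
  have b2: "\<bar>(2*a*E) * s * sin y\<bar> \<le> 1"
    using aE aE_bounds s by (simp add: abs_mult mult_le_one)
  have "\<bar>-(2*a) * cos (th0 t) * cos y + (2*a*E) * s * sin y + 2*lam\<bar> \<le> 2 + 2*\<bar>lam\<bar>"
    using b1 b2 by (simp add: abs_le_iff) linarith
  hence "\<bar>s * (-(2*a) * cos (th0 t) * cos y + (2*a*E) * s * sin y + 2*lam)\<bar> \<le> s * (2 + 2*\<bar>lam\<bar>)"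
    using s by (simp add: abs_mult mult_left_mono)
  thus ?thesis using e by (simp add: s_def mult.commute)
qed

lemma Gf_bound: "\<bar>Gf a E lam t y\<bar> \<le> 3 + 2*\<bar>lam\<bar>"
proof -
  have "\<bar>Gf a E lam t y\<bar> \<le> \<bar>Gf a E lam t y + sin y\<bar> + \<bar>sin y\<bar>" by linarith
  also have "\<dots> \<le> (2 + 2*\<bar>lam\<bar>) * 1 + 1"
    using Gf_near[of lam t y] sin_th0_pos[of t] sin_le_one[of "th0 t"]
    by (intro add_mono abs_sin_le_one order_trans[OF Gf_near] mult_left_mono) auto
  finally show ?thesis by simp
qed

lemma Gf_lip: "\<bar>Gf a E lam t y - Gf a E lam t z\<bar> \<le> 3 * \<bar>y - z\<bar>"
proof -
  define s where "s = sin (th0 t)"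
  have s: "0 < s" "s \<le> 1" using sin_th0_pos by (auto simp: s_def)
  have e: "Gf a E lam t y - Gf a E lam t z = -(2 * a * s * cos (th0 t)) * (cos y - cos z) + (2 * a * E * s ^ 2 - 1) * (sin y - sin z)"
    by (simp add: Gf_def s_def algebra_simps)
  have c1: "\<bar>2 * a * s * cos (th0 t)\<bar> \<le> 1"
    using aE_bounds s by (simp add: abs_mult mult_le_one)
  have "0 \<le> 2 * a * E * s ^ 2" "2 * a * E * s ^ 2 \<le> 1"
    using aE_bounds s by (auto simp: mult_le_one power_le_one)
  hence c2: "\<bar>2 * a * E * s ^ 2 - 1\<bar> \<le> 1" by simp
  have "\<bar>Gf a E lam t y - Gf a E lam t z\<bar> \<le> \<bar>2 * a * s * cos (th0 t)\<bar> * \<bar>cos y - cos z\<bar> + \<bar>2 * a * E * s ^ 2 - 1\<bar> * \<bar>sin y - sin z\<bar>"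
    unfolding e by (simp add: abs_mult[symmetric] abs_triangle_ineq4[THEN order_trans] )
  also have "\<dots> \<le> 1 * \<bar>y - z\<bar> + 1 * \<bar>y - z\<bar>"
    by (intro add_mono mult_mono c1 c2 cos_lip sin_lip) auto
  finally show ?thesis by simp
qed

lemma Gf_rep:
  assumes "sin (th0 t) \<le> 1/10" "-1 \<le> v" "v \<le> u" "u \<le> 1"
  shows "Gf a E lam t u - Gf a E lam t v \<le> -(u - v)/4"
proof -
  define s where "s = sin (th0 t)"
  have s: "0 < s" "s \<le> 1/10" using sin_th0_pos assms by (auto simp: s_def)
  have e: "Gf a E lam t u - Gf a E lam t v = -(2 * a * s * cos (th0 t)) * (cos u - cos v) + (2 * a * E * s ^ 2 - 1) * (sin u - sin v)"
    by (simp add: Gf_def s_def algebra_simps)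
  have c1: "\<bar>2 * a * s * cos (th0 t)\<bar> \<le> 1/10"
  proof -
    have "\<bar>2 * a * s * cos (th0 t)\<bar> = (2*a) * s * \<bar>cos (th0 t)\<bar>" using aE s by (simp add: abs_mult)
    also have "\<dots> \<le> 1 * (1/10) * 1"
      using aE_bounds s by (intro mult_mono) auto
    finally show ?thesis by simp
  qed
  have t1: "-(2 * a * s * cos (th0 t)) * (cos u - cos v) \<le> (1/10) * (u - v)"
  proof -
    have "-(2 * a * s * cos (th0 t)) * (cos u - cos v) \<le> \<bar>2 * a * s * cos (th0 t)\<bar> * \<bar>cos u - cos v\<bar>"
      by (simp add: abs_mult[symmetric])
    also have "\<dots> \<le> (1/10) * \<bar>u - v\<bar>" by (intro mult_mono c1 cos_lip) auto
    finally show ?thesis using assms by simp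
  qed
  have k: "0 \<le> 2 * a * E * s ^ 2" "2 * a * E * s ^ 2 \<le> 1/100"
  proof -
    show "0 \<le> 2 * a * E * s ^ 2" using aE_bounds by simp
    have "s^2 \<le> (1/10)^2" using s by (intro power_mono) auto
    hence "2 * a * E * s ^ 2 \<le> 1 * (1/10)^2" using aE_bounds by (intro mult_mono) auto
    thus "2 * a * E * s ^ 2 \<le> 1/100" by (simp add: power2_eq_square)
  qed
  have sd: "(u - v)/2 \<le> sin u - sin v" using sin_mono_half assms by simp
  have t2: "(2 * a * E * s ^ 2 - 1) * (sin u - sin v) \<le> (2 * a * E * s ^ 2 - 1) * ((u - v)/2)"
    using k sd by (intro mult_left_mono_neg) auto
  have t3: "(2 * a * E * s ^ 2 - 1) * ((u - v)/2) \<le> (1/100 - 1) * ((u - v)/2)"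
    using k assms by (intro mult_right_mono) auto
  have "-(2 * a * s * cos (th0 t)) * (cos u - cos v) + (2 * a * E * s ^ 2 - 1) * (sin u - sin v) \<le> (1/10) * (u - v) + (1/100 - 1) * ((u - v)/2)"
    by (rule add_mono[OF t1 order_trans[OF t2 t3]])
  also have "\<dots> \<le> -(u - v)/4" using assms by (simp add: field_simps)
  finally show ?thesis unfolding e .
qed

end



lemma deriv_cont_on: "\<forall>t\<in>S. (f has_real_derivative f' t) (at t) \<Longrightarrow> continuous_on S f"
  by (meson DERIV_isCont continuous_at_imp_continuous_on)

lemma minprin:
  fixes f f' :: "real \<Rightarrow> real"
  assumes ab: "a \<le> b" and cont: "continuous_on {a..b} f"
    and der: "\<forall>t\<in>{a<..b}. (f has_real_derivative f' t) (at t)"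
    and fa: "c \<le> f a" and pos: "\<forall>t\<in>{a<..b}. f t < c \<longrightarrow> 0 < f' t"
  shows "c \<le> f b"
proof (rule ccontr)
  assume nb: "\<not> c \<le> f b"
  obtain m where m: "m \<in> {a..b}" "\<forall>y\<in>{a..b}. f m \<le> f y"
    using continuous_attains_inf[OF compact_Icc _ cont] ab by auto
  have "f m \<le> f b" using m ab by auto
  hence fm: "f m < c" using nb by linarith
  have ma: "a < m" using m fm fa by (cases "m = a") auto
  have "0 < f' m" using pos fm ma m by auto
  then obtain d where d: "d > 0" "\<forall>h>0. h < d \<longrightarrow> f (m - h) < f m"
    using DERIV_pos_inc_left der ma m by (meson greaterThanAtMost_iff atLeastAtMost_iff)
  define h where "h = min (d/2) ((m - a)/2)"
  have h1a: "h > 0" using d(1) ma unfolding h_def by simp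
  have h1b: "h < d" using d(1) unfolding h_def by simp
  have h1c: "h \<le> (m - a)/2" unfolding h_def by (rule min.cobounded2)
  note h1 = h1a h1b h1c
  have h: "h > 0" "h < d" "m - h \<in> {a..b}" using h1 m by auto
  have "f (m - h) < f m" using d(2) h(1,2) by blast
  moreover have "f m \<le> f (m - h)" using m(2) h(3) by blast
  ultimately show False by simp
qed

lemma minprin_bot:
  fixes f f' :: "real \<Rightarrow> real"
  assumes lim: "(f \<longlongrightarrow> l) at_bot" and cl: "c \<le> l"
    and der: "\<forall>t\<le>T. (f has_real_derivative f' t) (at t)"
    and pos: "\<forall>t\<le>T. f t < c \<longrightarrow> 0 < f' t" and bT: "b \<le> T"
  shows "c \<le> f b"
proof (rule ccontr)
  assume nb: "\<not> c \<le> f b"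
  define c' where "c' = (f b + c) / 2"
  have "c' < l" using nb cl by (simp add: c'_def)
  hence "eventually (\<lambda>t. c' < f t) at_bot" using lim by (rule order_tendstoD(1)[rotated])
  then obtain N where N: "\<forall>t\<le>N. c' < f t" by (auto simp: eventually_at_bot_linorder)
  define R where "R = min N (b - 1)"
  have Rb: "R \<le> b" by (simp add: R_def)
  have "c' \<le> f b"
  proof (rule minprin[OF Rb])
    show "continuous_on {R..b} f" by (rule deriv_cont_on[where f'=f']) (use der bT in auto)
    show "\<forall>t\<in>{R<..b}. (f has_real_derivative f' t) (at t)" using der bT by auto
    show "c' \<le> f R" using N by (simp add: R_def less_imp_le)
    show "\<forall>t\<in>{R<..b}. f t < c' \<longrightarrow> 0 < f' t" using pos bT nb by (auto simp: c'_def)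
  qed
  thus False using nb by (simp add: c'_def)
qed

lemma barrier:
  fixes f f' :: "real \<Rightarrow> real"
  assumes ab: "a \<le> b" and cont: "continuous_on {a..b} f"
    and der: "\<forall>t\<in>{a<..b}. (f has_real_derivative f' t) (at t)"
    and fa: "0 < f a" and pos: "\<forall>t\<in>{a<..b}. f t = 0 \<longrightarrow> 0 < f' t"
  shows "0 < f b"
proof (rule ccontr)
  assume nb: "\<not> 0 < f b"
  define Z where "Z = {t\<in>{a..b}. f t = 0}"
  have "closed Z" unfolding Z_def by (rule continuous_closed_preimage_constant[OF cont closed_atLeastAtMost])
  have "compact ({a..b} \<inter> Z)" by (rule compact_Int_closed[OF compact_Icc \<open>closed Z\<close>])
  moreover have "{a..b} \<inter> Z = Z" unfolding Z_def by blast
  ultimately have cZ: "compact Z" by simp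
  have fb0: "f b \<le> 0" using nb by linarith
  have fa0: "0 \<le> f a" using fa by linarith
  obtain z0 where z0: "z0 \<ge> a" "z0 \<le> b" "f z0 = 0" using IVT2'[of f b 0 a, OF fb0 fa0 ab cont] by blast
  hence "z0 \<in> Z" unfolding Z_def by simp
  hence "Z \<noteq> {}" by blast
  then obtain m where m: "m \<in> Z" "\<forall>t\<in>Z. m \<le> t" using compact_attains_inf[OF cZ] by blast
  have mZ: "a \<le> m" "m \<le> b" "f m = 0" using m(1) unfolding Z_def by simp_all
  have ma: "a < m" using mZ fa by (cases "m = a") simp_all
  have mab: "m \<in> {a<..b}" using ma mZ by simp
  have dm: "(f has_real_derivative f' m) (at m)" using der mab by blast
  have "0 < f' m" using pos mab mZ(3) by blast
  then obtain d where d: "d > 0" "\<forall>h>0. h < d \<longrightarrow> f (m - h) < f m"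
    using DERIV_pos_inc_left[OF dm] by blast
  define h where "h = min (d/2) ((m - a)/2)"
  have h1a: "h > 0" using d(1) ma unfolding h_def by simp
  have h1b: "h < d" using d(1) unfolding h_def by simp
  have h1c: "h \<le> (m - a)/2" unfolding h_def by (rule min.cobounded2)
  have fmh: "f (m - h) < 0" using d(2) h1a h1b mZ(3) by auto
  have sub: "{a..m-h} \<subseteq> {a..b}" using mZ h1a by auto
  have cc: "continuous_on {a..m-h} f" by (rule continuous_on_subset[OF cont sub])
  have am: "a \<le> m - h" using h1c ma by (simp add: field_simps)
  have fmh0: "f (m - h) \<le> 0" using fmh by linarith
  obtain z where z: "z \<ge> a" "z \<le> m - h" "f z = 0"
    using IVT2'[of f "m - h" 0 a, OF fmh0 fa0 am cc] by blast
  have "z \<in> Z" using z mZ h1a unfolding Z_def by simp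
  hence "m \<le> z" using m(2) by blast
  thus False using z h1a by simp
qed

lemma compare:
  fixes D D' :: "real \<Rightarrow> real"
  assumes ab: "a \<le> b" and cont: "continuous_on {a..b} D"
    and der: "\<forall>t\<in>{a<..b}. (D has_real_derivative D' t) (at t)"
    and Da: "0 \<le> D a" and pos: "\<forall>t\<in>{a<..b}. D t < 0 \<longrightarrow> K * D t \<le> D' t"
  shows "0 \<le> D b"
proof -
  define M where "M = \<bar>K\<bar> + 1"
  define E where "E t = D t * exp (- M * t)" for t
  define E' where "E' t = D' t * exp (- M * t) - D t * M * exp (- M * t)" for t
  have "0 \<le> E b"
  proof (rule minprin[OF ab])
    show "continuous_on {a..b} E" unfolding E_def by (intro continuous_intros cont)
    show "\<forall>t\<in>{a<..b}. (E has_real_derivative E' t) (at t)"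
    proof
      fix t assume "t \<in> {a<..b}"
      hence "(D has_real_derivative D' t) (at t)" using der by auto
      thus "(E has_real_derivative E' t) (at t)" unfolding E_def[abs_def] E'_def
        by (auto intro!: derivative_eq_intros)
    qed
    show "0 \<le> E a" using Da by (simp add: E_def)
    show "\<forall>t\<in>{a<..b}. E t < 0 \<longrightarrow> 0 < E' t"
    proof (intro ballI impI)
      fix t assume t: "t \<in> {a<..b}" "E t < 0"
      hence Dt: "D t < 0" by (simp add: E_def mult_less_0_iff)
      hence "K * D t \<le> D' t" using pos t by auto
      moreover have "K * D t > M * D t" using Dt by (simp add: M_def mult_strict_right_mono_neg)
      ultimately have "0 < D' t - D t * M" by (simp add: mult.commute)
      hence "0 < (D' t - D t * M) * exp (- M * t)" by simp
      thus "0 < E' t" by (simp add: E'_def algebra_simps)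
    qed
  qed
  thus ?thesis by (simp add: E_def zero_le_mult_iff)
qed



definition sol :: "real \<Rightarrow> real \<Rightarrow> real \<Rightarrow> (real \<Rightarrow> real) \<Rightarrow> bool" where
  "sol a E lam y \<longleftrightarrow> (\<forall>t. (y has_real_derivative Gf a E lam t (y t)) (at t))"

lemma sin_th0_small: "t \<le> ln (1/20) \<Longrightarrow> sin (th0 t) \<le> 1/10"
proof -
  assume "t \<le> ln (1/20)"
  hence "exp t \<le> exp (ln (1/20))" by (simp only: exp_le_cancel_iff)
  hence "exp t \<le> 1/20" by simp
  thus ?thesis using sin_th0_le[of t] by linarith
qed

lemma eventually_small:
  fixes y z :: "real \<Rightarrow> real"
  assumes "(y \<longlongrightarrow> 0) at_bot" "(z \<longlongrightarrow> (0::real)) at_bot"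
  shows "\<exists>T0. \<forall>t\<le>T0. \<bar>y t\<bar> \<le> 1 \<and> \<bar>z t\<bar> \<le> 1 \<and> sin (th0 t) \<le> 1/10"
proof -
  have "eventually (\<lambda>t. dist (y t) 0 < 1) at_bot" using assms(1) by (rule tendstoD) simp
  moreover have "eventually (\<lambda>t. dist (z t) 0 < 1) at_bot" using assms(2) by (rule tendstoD) simp
  moreover have "eventually (\<lambda>t::real. t \<le> ln (1/20)) at_bot" by (rule eventually_le_at_bot)
  ultimately have "eventually (\<lambda>t. \<bar>y t\<bar> \<le> 1 \<and> \<bar>z t\<bar> \<le> 1 \<and> sin (th0 t) \<le> 1/10) at_bot"
  proof eventually_elim
    case (elim t)
    thus ?case using sin_th0_small[of t] by (simp add: dist_real_def)
  qed
  thus ?thesis by (simp add: eventually_at_bot_linorder)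
qed

context
  fixes a E :: real
  assumes aE: "0 < a" "a < 1/2" "0 \<le> E" "E \<le> 1"
begin

lemma sol_cont: "sol a E lam y \<Longrightarrow> continuous_on S y"
  unfolding sol_def by (rule deriv_cont_on) auto

lemma unstable_order:
  assumes sy: "sol a E lam y" and sz: "sol a E mu z" and lm: "lam \<le> mu"
    and ly: "(y \<longlongrightarrow> 0) at_bot" and lz: "(z \<longlongrightarrow> 0) at_bot"
  shows "y t \<le> z t"
proof -
  obtain T0 where T0: "\<forall>t\<le>T0. \<bar>y t\<bar> \<le> 1 \<and> \<bar>z t\<bar> \<le> 1 \<and> sin (th0 t) \<le> 1/10"
    using eventually_small[OF ly lz] by blast
  define D where "D t = z t - y t" for t
  define D' where "D' t = Gf a E mu t (z t) - Gf a E lam t (y t)" for t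
  have der: "\<forall>t. (D has_real_derivative D' t) (at t)"
    using sy sz unfolding sol_def D_def[abs_def] D'_def by (auto intro!: derivative_intros)
  have key: "D' t \<ge> Gf a E lam t (z t) - Gf a E lam t (y t)" for t
  proof -
    have "0 \<le> 2 * (mu - lam) * sin (th0 t)" using lm sin_th0_pos[of t] by (intro mult_nonneg_nonneg) auto
    thus ?thesis using Gf_lam[of a E mu t "z t" lam] by (simp add: D'_def)
  qed
  have DL: "(D \<longlongrightarrow> 0) at_bot" unfolding D_def[abs_def] using tendsto_diff[OF lz ly] by simp
  have left: "0 \<le> D t" if "t \<le> T0" for t
  proof (rule minprin_bot[OF DL order_refl _ _ that])
    show "\<forall>t\<le>T0. (D has_real_derivative D' t) (at t)" using der by blast
    show "\<forall>t\<le>T0. D t < 0 \<longrightarrow> 0 < D' t"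
    proof (intro allI impI)
      fix t assume t: "t \<le> T0" "D t < 0"
      have "Gf a E lam t (y t) - Gf a E lam t (z t) \<le> -(y t - z t)/4"
        using T0 t aE by (intro Gf_rep) (auto simp: D_def abs_le_iff)
      thus "0 < D' t" using key[of t] t by (simp add: D_def)
    qed
  qed
  show ?thesis
  proof (cases "t \<le> T0")
    case True thus ?thesis using left[of t] by (simp add: D_def)
  next
    case False
    have "0 \<le> D t"
    proof (rule compare[where K=3 and D=D and D'=D' and a=T0 and b=t])
      show "T0 \<le> t" using False by simp
      show "continuous_on {T0..t} D" by (rule deriv_cont_on[where f'=D']) (use der in blast)
      show "\<forall>s\<in>{T0<..t}. (D has_real_derivative D' s) (at s)" using der by blast
      show "0 \<le> D T0" using left by simp
      show "\<forall>s\<in>{T0<..t}. D s < 0 \<longrightarrow> 3 * D s \<le> D' s"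
      proof (intro ballI impI)
        fix s assume "D s < 0"
        have "\<bar>Gf a E lam s (z s) - Gf a E lam s (y s)\<bar> \<le> 3 * \<bar>z s - y s\<bar>" using aE by (rule Gf_lip)
        thus "3 * D s \<le> D' s" using key[of s] \<open>D s < 0\<close> by (simp add: D_def abs_le_iff)
      qed
    qed
    thus ?thesis by (simp add: D_def)
  qed
qed

lemma unstable_lip:
  assumes sy: "sol a E lam y" and sz: "sol a E mu z" and lm: "lam \<le> mu"
    and ly: "(y \<longlongrightarrow> 0) at_bot" and lz: "(z \<longlongrightarrow> 0) at_bot"
    and T0: "\<forall>t\<le>T0. \<bar>y t\<bar> \<le> 1 \<and> \<bar>z t\<bar> \<le> 1 \<and> sin (th0 t) \<le> 1/10"
  shows "z t - y t \<le> 10 * (mu - lam) * exp (3 * \<bar>t - T0\<bar>)"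
proof -
  define ep where "ep = mu - lam"
  have ep: "0 \<le> ep" using lm by (simp add: ep_def)
  define D where "D t = z t - y t" for t
  define D' where "D' t = Gf a E mu t (z t) - Gf a E lam t (y t)" for t
  have der: "\<forall>t. (D has_real_derivative D' t) (at t)"
    using sy sz unfolding sol_def D_def[abs_def] D'_def by (auto intro!: derivative_intros)
  have D0: "0 \<le> D t" for t using unstable_order[OF sy sz lm ly lz] by (simp add: D_def)
  have eqD': "D' t = 2 * ep * sin (th0 t) + (Gf a E lam t (z t) - Gf a E lam t (y t))" for t
    using Gf_lam[of a E mu t "z t" lam] by (simp add: D'_def ep_def)
  have DL: "(D \<longlongrightarrow> 0) at_bot" unfolding D_def[abs_def] using tendsto_diff[OF lz ly] by simp
  have left: "D t \<le> 8 * ep" if "t \<le> T0" for t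
  proof -
    define f where "f t = 8 * ep - D t" for t
    have "((\<lambda>t. 8 * ep - D t) \<longlongrightarrow> 8 * ep - 0) at_bot" by (intro tendsto_intros DL)
    hence fl: "(f \<longlongrightarrow> 8 * ep) at_bot" by (simp add: f_def[abs_def])
    have "0 \<le> f t"
    proof (rule minprin_bot[OF fl _ _ _ that, where f'="\<lambda>t. - D' t"])
      show "0 \<le> 8 * ep" using ep by simp
      show "\<forall>t\<le>T0. (f has_real_derivative - D' t) (at t)"
        using der unfolding f_def[abs_def] by (auto intro!: derivative_eq_intros)
      show "\<forall>t\<le>T0. f t < 0 \<longrightarrow> 0 < - D' t"
      proof (intro allI impI)
        fix t assume t: "t \<le> T0" "f t < 0"
        have "Gf a E lam t (z t) - Gf a E lam t (y t) \<le> -(z t - y t)/4"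
          using T0 t D0[of t] aE by (intro Gf_rep) (auto simp: D_def abs_le_iff)
        moreover have "sin (th0 t) \<le> 1" by simp
        hence "2 * ep * sin (th0 t) \<le> 2 * ep" using ep by (simp add: mult_left_le)
        ultimately show "0 < - D' t" using t eqD'[of t] by (simp add: f_def D_def)
      qed
    qed
    thus ?thesis by (simp add: f_def)
  qed
  have "D t \<le> 10 * ep * exp (3 * \<bar>t - T0\<bar>)"
  proof (cases "t \<le> T0")
    case True
    have "8 * ep \<le> 10 * ep * 1" using ep by simp
    also have "\<dots> \<le> 10 * ep * exp (3 * \<bar>t - T0\<bar>)" using ep by (intro mult_left_mono) auto
    finally show ?thesis using left[OF True] by simp
  next
    case False
    define f where "f s = 10 * ep * exp (3 * (s - T0)) - ep - D s" for s
    define f' where "f' s = 30 * ep * exp (3 * (s - T0)) - D' s" for s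
    have fd: "\<forall>s. (f has_real_derivative f' s) (at s)"
      using der unfolding f_def[abs_def] f'_def by (auto intro!: derivative_eq_intros)
    have "0 \<le> f t"
    proof (rule compare[where K=3 and D=f and D'=f' and a=T0 and b=t])
      show "T0 \<le> t" using False by simp
      show "continuous_on {T0..t} f" by (rule deriv_cont_on[where f'=f']) (use fd in blast)
      show "\<forall>s\<in>{T0<..t}. (f has_real_derivative f' s) (at s)" using fd by blast
      show "0 \<le> f T0" using left[of T0] ep by (simp add: f_def)
      show "\<forall>s\<in>{T0<..t}. f s < 0 \<longrightarrow> 3 * f s \<le> f' s"
      proof (intro ballI impI)
        fix s
        have "\<bar>Gf a E lam s (z s) - Gf a E lam s (y s)\<bar> \<le> 3 * \<bar>z s - y s\<bar>" using aE by (rule Gf_lip)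
        moreover have "sin (th0 s) \<le> 1" by simp
        hence "2 * ep * sin (th0 s) \<le> 2 * ep" using ep by (simp add: mult_left_le)
        ultimately have "D' s \<le> 2 * ep + 3 * D s" using eqD'[of s] D0[of s] by (simp add: D_def abs_le_iff)
        thus "3 * f s \<le> f' s" using ep by (simp add: f_def f'_def)
      qed
    qed
    moreover have "3 * \<bar>t - T0\<bar> = 3 * (t - T0)" using False by simp
    ultimately show ?thesis using ep by (simp add: f_def)
  qed
  thus ?thesis by (simp add: D_def ep_def)
qed

end



lemma inteq_cont:
  fixes F g :: "real \<Rightarrow> real"
  assumes F: "\<forall>t. s0 \<le> t \<longrightarrow> t \<le> b \<longrightarrow> F t = F s0 + integral {s0..t} g"
    and gi: "g integrable_on {s0..b}"
  shows "continuous_on {s0..b} F"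
proof -
  have c: "continuous_on {s0..b} (\<lambda>t. F s0 + integral {s0..t} g)"
    by (rule continuous_on_add[OF continuous_on_const indefinite_integral_continuous_1[OF gi]])
  show ?thesis
  proof (rule continuous_on_eq[OF c])
    fix x assume "x \<in> {s0..b}"
    hence x: "s0 \<le> x" "x \<le> b" by auto
    show "F s0 + integral {s0..x} g = F x" using F[rule_format, OF x] by (rule sym)
  qed
qed

lemma inteq_deriv:
  fixes F g :: "real \<Rightarrow> real"
  assumes F: "\<forall>t. s0 \<le> t \<longrightarrow> t \<le> b \<longrightarrow> F t = F s0 + integral {s0..t} g"
    and gc: "continuous_on {s0..b} g" and t: "s0 < t" "t < b"
  shows "(F has_real_derivative g t) (at t)"
proof -
  have "((\<lambda>u. integral {s0..u} g) has_vector_derivative g t) (at t within {s0..b})"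
    using t by (intro integral_has_vector_derivative gc) auto
  moreover have "at t within {s0..b} = at t" using t by (intro at_within_interior) auto
  ultimately have d1: "((\<lambda>u. integral {s0..u} g) has_real_derivative g t) (at t)"
    by (simp add: has_real_derivative_iff_has_vector_derivative)
  have "((\<lambda>u. F s0 + integral {s0..u} g) has_real_derivative 0 + g t) (at t)"
    by (rule DERIV_add[OF DERIV_const d1])
  hence d2: "((\<lambda>u. F s0 + integral {s0..u} g) has_real_derivative g t) (at t)" by simp
  show ?thesis
  proof (rule has_field_derivative_transform_within_open[OF d2, of "{s0<..<b}"])
    show "open {s0<..<b}" by simp
    show "t \<in> {s0<..<b}" using t by simp
    fix x assume "x \<in> {s0<..<b}"
    hence x: "s0 \<le> x" "x \<le> b" by auto
    show "F s0 + integral {s0..x} g = F x" using F[rule_format, OF x] by (rule sym)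
  qed
qed

lemma Gf_tendsto:
  assumes X: "(X \<longlongrightarrow> (v::real)) F"
  shows "((\<lambda>k. Gf a E lam t (X k)) \<longlongrightarrow> Gf a E lam t v) F"
proof -
  have c: "((\<lambda>k. cos (X k)) \<longlongrightarrow> cos v) F" by (rule isCont_tendsto_compose[OF isCont_cos X])
  have s: "((\<lambda>k. sin (X k)) \<longlongrightarrow> sin v) F" by (rule isCont_tendsto_compose[OF isCont_sin X])
  show ?thesis unfolding Gf_def by (intro tendsto_intros c s)
qed

lemma ftc_real:
  fixes f f' :: "real \<Rightarrow> real"
  assumes "a \<le> b" "\<And>x. (f has_real_derivative f' x) (at x)"
  shows "(f' has_integral f b - f a) {a..b}"
proof (rule fundamental_theorem_of_calculus[OF assms(1)])
  fix x
  have "(f has_real_derivative f' x) (at x within {a..b})" by (rule has_field_derivative_at_within[OF assms(2)])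
  thus "(f has_vector_derivative f' x) (at x within {a..b})" by (simp add: has_real_derivative_iff_has_vector_derivative)
qed

context
  fixes a E :: real
  assumes aE: "0 < a" "a < 1/2" "0 \<le> E" "E \<le> 1"
begin

lemma ivp:
  fixes lam a0 y0 :: real
  shows "\<exists>y. y a0 = y0 \<and> (\<forall>b. continuous_on {a0..b} y) \<and>
             (\<forall>t>a0. (y has_real_derivative Gf a E lam t (y t)) (at t))"
proof -
  define M where "M = 3 + 2*\<bar>lam\<bar>"
  define H where "H t v = exp (3*t) * Gf a E lam t (exp (-3*t) * v) + 3 * v" for t v
  define Vm where "Vm t = exp (3*t) * (y0 - M*(t - a0))" for t
  define Vp where "Vp t = exp (3*t) * (y0 + M*(t - a0))" for t
  define Vm' where "Vm' t = 3 * Vm t - M * exp (3*t)" for t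
  define Vp' where "Vp' t = 3 * Vp t + M * exp (3*t)" for t
  define c0 where "c0 = exp (3*a0) * y0"
  define V where "V = rec_nat Vm (\<lambda>k f t. c0 + integral {a0..t} (\<lambda>r. H r (f r)))"
  have V0: "V 0 = Vm" by (simp add: V_def)
  have VS: "V (Suc k) t = c0 + integral {a0..t} (\<lambda>r. H r (V k r))" for k t by (simp add: V_def)
  have ee: "exp (3*t) * exp (-3*t) = 1" for t::real by (simp add: exp_add[symmetric])
  have Gb: "\<bar>Gf a E lam t v\<bar> \<le> M" for t v using Gf_bound[OF aE] by (simp add: M_def)
  have M0: "0 \<le> M" by (simp add: M_def)
  have Hmono: "H t v \<le> H t w" if "v \<le> w" for t v w
  proof -
    have "\<bar>Gf a E lam t (exp (-3*t) * w) - Gf a E lam t (exp (-3*t) * v)\<bar> \<le> 3 * \<bar>exp (-3*t) * w - exp (-3*t) * v\<bar>"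
      by (rule Gf_lip[OF aE])
    also have "\<dots> = 3 * exp (-3*t) * (w - v)" using that by (simp add: algebra_simps abs_mult)
    finally have "- (3 * exp (-3*t) * (w - v)) \<le> Gf a E lam t (exp (-3*t) * w) - Gf a E lam t (exp (-3*t) * v)"
      by linarith
    hence "exp (3*t) * (- (3 * exp (-3*t) * (w - v))) \<le> exp (3*t) * (Gf a E lam t (exp (-3*t) * w) - Gf a E lam t (exp (-3*t) * v))"
      by (intro mult_left_mono) auto
    moreover have "exp (3*t) * (- (3 * exp (-3*t) * (w - v))) = - 3 * (w - v)"
      using ee[of t] by (simp add: algebra_simps)
    ultimately show ?thesis by (simp add: H_def algebra_simps)
  qed
  have Hcont: "continuous_on S (\<lambda>r. H r (f r))" if "continuous_on S f" for S f
  proof -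
    have "continuous_on S (\<lambda>r. exp (-3*r) * f r)" by (intro continuous_intros that)
    hence "continuous_on S (\<lambda>r. Gf a E lam r (exp (-3*r) * f r))" by (rule Gf_cont)
    thus ?thesis unfolding H_def by (intro continuous_intros that)
  qed
  have Htend: "((\<lambda>k. H t (X k)) \<longlongrightarrow> H t v) sequentially" if "X \<longlonglongrightarrow> v" for t X v
    unfolding H_def by (intro tendsto_intros Gf_tendsto that)
  have Hbound: "\<bar>H t v\<bar> \<le> exp (3*t) * M + 3 * \<bar>v\<bar>" for t v
  proof -
    have "\<bar>exp (3*t) * Gf a E lam t (exp (-3*t) * v)\<bar> \<le> exp (3*t) * M"
      using Gb by (simp add: abs_mult)
    moreover have "\<bar>H t v\<bar> \<le> \<bar>exp (3*t) * Gf a E lam t (exp (-3*t) * v)\<bar> + \<bar>3 * v\<bar>"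
      unfolding H_def by (rule abs_triangle_ineq)
    ultimately show ?thesis by simp
  qed
  have Hsub: "Vm' t \<le> H t (Vm t)" for t
  proof -
    have "- M \<le> Gf a E lam t (exp (-3*t) * Vm t)" using Gb[of t "exp (-3*t) * Vm t"] by (simp only: abs_le_iff) linarith
    hence "exp (3*t) * (- M) \<le> exp (3*t) * Gf a E lam t (exp (-3*t) * Vm t)" by (intro mult_left_mono) auto
    thus ?thesis by (simp add: H_def Vm'_def algebra_simps)
  qed
  have Hsup: "H t (Vp t) \<le> Vp' t" for t
  proof -
    have "Gf a E lam t (exp (-3*t) * Vp t) \<le> M" using Gb[of t "exp (-3*t) * Vp t"] by (simp only: abs_le_iff)
    hence "exp (3*t) * Gf a E lam t (exp (-3*t) * Vp t) \<le> exp (3*t) * M" by (intro mult_left_mono) auto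
    thus ?thesis by (simp add: H_def Vp'_def algebra_simps)
  qed
  have dVm: "(Vm has_real_derivative Vm' t) (at t)" for t
    unfolding Vm_def[abs_def] Vm'_def by (auto intro!: derivative_eq_intros simp: algebra_simps)
  have dVp: "(Vp has_real_derivative Vp' t) (at t)" for t
    unfolding Vp_def[abs_def] Vp'_def by (auto intro!: derivative_eq_intros simp: algebra_simps)
  have cVm: "continuous_on S Vm" for S unfolding Vm_def by (intro continuous_intros)
  have cVp: "continuous_on S Vp" for S unfolding Vp_def by (intro continuous_intros)
  have cVm': "continuous_on S Vm'" for S unfolding Vm'_def Vm_def by (intro continuous_intros)
  have cVp': "continuous_on S Vp'" for S unfolding Vp'_def Vp_def by (intro continuous_intros)
  have Vma: "Vm a0 = c0" "Vp a0 = c0" by (simp_all add: Vm_def Vp_def c0_def)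
  have VmVp: "Vm t \<le> Vp t" if "a0 \<le> t" for t
    using that M0 by (simp add: Vm_def Vp_def mult_nonneg_nonneg)
  have Hint: "(\<lambda>r. H r (f r)) integrable_on {a0..t}" if "continuous_on {a0..t} f" for f t
    by (rule integrable_continuous_real[OF Hcont[OF that]])
  have lowVm: "Vm t \<le> c0 + integral {a0..t} (\<lambda>r. H r (Vm r))" if "a0 \<le> t" for t
  proof -
    have "(Vm' has_integral Vm t - Vm a0) {a0..t}" by (rule ftc_real[OF that dVm])
    hence "integral {a0..t} Vm' = Vm t - Vm a0" by (rule integral_unique)
    moreover have "integral {a0..t} Vm' \<le> integral {a0..t} (\<lambda>r. H r (Vm r))"
      by (intro integral_le integrable_continuous_real cVm' Hint cVm Hsub)
    ultimately show ?thesis using Vma by simp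
  qed
  have upVp: "c0 + integral {a0..t} (\<lambda>r. H r (f r)) \<le> Vp t"
    if "a0 \<le> t" "continuous_on {a0..t} f" "\<forall>r\<in>{a0..t}. f r \<le> Vp r" for t f
  proof -
    have "(Vp' has_integral Vp t - Vp a0) {a0..t}" by (rule ftc_real[OF that(1) dVp])
    hence "integral {a0..t} Vp' = Vp t - Vp a0" by (rule integral_unique)
    moreover have "integral {a0..t} (\<lambda>r. H r (f r)) \<le> integral {a0..t} (\<lambda>r. H r (Vp r))"
      using that by (intro integral_le Hint cVp Hmono) auto
    moreover have "integral {a0..t} (\<lambda>r. H r (Vp r)) \<le> integral {a0..t} Vp'"
      by (intro integral_le integrable_continuous_real cVp' Hint cVp Hsup)
    ultimately show ?thesis using Vma by simp
  qed
  have contS: "continuous_on {a0..b} (V (Suc k))" if "\<forall>b. continuous_on {a0..b} (V k)" for k b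
  proof -
    have "continuous_on {a0..b} (\<lambda>t. c0 + integral {a0..t} (\<lambda>r. H r (V k r)))"
      by (intro continuous_intros indefinite_integral_continuous_1 Hint) (use that in blast)
    thus ?thesis by (simp add: VS[abs_def])
  qed
  have P: "(\<forall>b. continuous_on {a0..b} (V k)) \<and> (\<forall>t\<ge>a0. Vm t \<le> V k t \<and> V k t \<le> Vp t \<and> V k t \<le> V (Suc k) t)" for k
  proof (induction k)
    case 0
    show ?case using cVm VmVp lowVm by (auto simp: V0 VS)
  next
    case (Suc k)
    have c1: "\<forall>b. continuous_on {a0..b} (V (Suc k))" using contS Suc by blast
    have low: "Vm t \<le> V (Suc k) t" if "a0 \<le> t" for t
    proof -
      have "Vm t \<le> V k t" "V k t \<le> V (Suc k) t" using Suc that by blast+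
      thus ?thesis by linarith
    qed
    have up: "V (Suc k) t \<le> Vp t" if "a0 \<le> t" for t
      unfolding VS using that Suc by (intro upVp) auto
    have mono: "V (Suc k) t \<le> V (Suc (Suc k)) t" if "a0 \<le> t" for t
    proof -
      have "integral {a0..t} (\<lambda>r. H r (V k r)) \<le> integral {a0..t} (\<lambda>r. H r (V (Suc k) r))"
        using Suc c1 by (intro integral_le Hint Hmono) auto
      thus ?thesis by (simp only: VS[of "Suc k"] VS[of k])
    qed
    show ?case using c1 low up mono by blast
  qed
  define Vl where "Vl t = Sup (range (\<lambda>k. V k t))" for t
  have Vlim: "(\<lambda>k. V k t) \<longlonglongrightarrow> Vl t" if "a0 \<le> t" for t
    unfolding Vl_def
  proof (rule LIMSEQ_incseq_SUP)
    show "bdd_above (range (\<lambda>k. V k t))" using P that by (auto intro!: bdd_aboveI[of _ "Vp t"])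
    show "incseq (\<lambda>k. V k t)" using P that by (intro incseq_SucI) auto
  qed
  have Vlb: "Vm t \<le> Vl t \<and> Vl t \<le> Vp t" if "a0 \<le> t" for t
  proof
    have "Vm t \<le> V k t" for k using P that by blast
    thus "Vm t \<le> Vl t" using Vlim[OF that] by (intro LIMSEQ_le_const) auto
    have "V k t \<le> Vp t" for k using P that by blast
    thus "Vl t \<le> Vp t" using Vlim[OF that] by (intro LIMSEQ_le_const2) auto
  qed
  define h where "h r = exp (3*r) * M + 3 * (\<bar>Vm r\<bar> + \<bar>Vp r\<bar>)" for r
  have hint: "h integrable_on {a0..t}" for t
    unfolding h_def by (intro integrable_continuous_real continuous_intros cVm cVp)
  have Vleq: "(\<lambda>r. H r (Vl r)) integrable_on {a0..t} \<and> Vl t = c0 + integral {a0..t} (\<lambda>r. H r (Vl r))"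
    if "a0 \<le> t" for t
  proof -
    have b: "norm (H r (V k r)) \<le> h r" if "r \<in> {a0..t}" for k r
    proof -
      have "Vm r \<le> V k r" "V k r \<le> Vp r" using P that by auto
      hence "\<bar>V k r\<bar> \<le> \<bar>Vm r\<bar> + \<bar>Vp r\<bar>" by linarith
      thus ?thesis using Hbound[of r "V k r"] by (simp add: h_def)
    qed
    have conv: "(\<lambda>k. H r (V k r)) \<longlonglongrightarrow> H r (Vl r)" if "r \<in> {a0..t}" for r
      using that by (intro Htend Vlim) auto
    have ik: "(\<lambda>r. H r (V k r)) integrable_on {a0..t}" for k using P by (intro Hint) blast
    note dc = dominated_convergence[OF ik hint b conv]
    have "(\<lambda>k. V (Suc k) t) \<longlonglongrightarrow> c0 + integral {a0..t} (\<lambda>r. H r (Vl r))"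
      unfolding VS by (intro tendsto_intros dc(2))
    moreover have "(\<lambda>k. V (Suc k) t) \<longlonglongrightarrow> Vl t" using Vlim[OF that] by (rule LIMSEQ_Suc)
    ultimately have "Vl t = c0 + integral {a0..t} (\<lambda>r. H r (Vl r))" using LIMSEQ_unique by blast
    thus ?thesis using dc(1) by blast
  qed
  have Vla: "Vl a0 = c0"
  proof -
    have "Vl a0 = c0 + integral {a0..a0} (\<lambda>r. H r (Vl r))" using Vleq[of a0] by blast
    thus ?thesis by simp
  qed
  have Vleq': "\<forall>t. a0 \<le> t \<longrightarrow> t \<le> b \<longrightarrow> Vl t = Vl a0 + integral {a0..t} (\<lambda>r. H r (Vl r))" for b
  proof (intro allI impI)
    fix t assume "a0 \<le> t"
    hence "Vl t = c0 + integral {a0..t} (\<lambda>r. H r (Vl r))" using Vleq by blast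
    thus "Vl t = Vl a0 + integral {a0..t} (\<lambda>r. H r (Vl r))" by (simp only: Vla)
  qed
  have Vlc: "continuous_on {a0..b} Vl" for b
  proof (cases "a0 \<le> b")
    case True
    have "(\<lambda>r. H r (Vl r)) integrable_on {a0..b}" using Vleq[OF True] by blast
    thus ?thesis by (rule inteq_cont[OF Vleq'[of b]])
  qed simp
  have Vld: "(Vl has_real_derivative H t (Vl t)) (at t)" if "a0 < t" for t
    using that by (intro inteq_deriv[OF Vleq'[of "t+1"]] Hcont[OF Vlc]) auto
  define y where "y t = exp (-3*t) * Vl t" for t
  have "y a0 = exp (-3*a0) * (exp (3*a0) * y0)" unfolding y_def Vla c0_def by (rule refl)
  also have "\<dots> = y0" by (simp add: mult.assoc[symmetric] exp_add[symmetric])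
  finally have ya: "y a0 = y0" .
  have yc: "continuous_on {a0..b} y" for b
  proof -
    have "continuous_on {a0..b} (\<lambda>t. exp (-3*t))" by (intro continuous_intros)
    thus ?thesis unfolding y_def[abs_def] by (rule continuous_on_mult[OF _ Vlc])
  qed
  have yd: "(y has_real_derivative Gf a E lam t (y t)) (at t)" if "a0 < t" for t
  proof -
    have de: "((\<lambda>t. exp (-3*t)) has_real_derivative (-3 * exp (-3*t))) (at t)"
      by (auto intro!: derivative_eq_intros)
    have "(y has_real_derivative (-3 * exp (-3*t)) * Vl t + exp (-3*t) * H t (Vl t)) (at t)"
      using DERIV_mult[OF de Vld[OF that]] unfolding y_def[abs_def] by (simp add: algebra_simps)
    moreover have "(-3 * exp (-3*t)) * Vl t + exp (-3*t) * H t (Vl t) = Gf a E lam t (y t)"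
    proof -
      have "exp (-3*t) * H t (Vl t) = (exp (-3*t) * exp (3*t)) * Gf a E lam t (y t) + 3 * (exp (-3*t) * Vl t)"
        by (simp add: H_def y_def algebra_simps)
      also have "exp (-3*t) * exp (3*t) = 1" by (simp add: exp_add[symmetric])
      finally show ?thesis by (simp add: y_def)
    qed
    ultimately show ?thesis by simp
  qed
  show ?thesis using ya yc yd by blast
qed

end



context
  fixes a E :: real
  assumes aE: "0 < a" "a < 1/2" "0 \<le> E" "E \<le> 1"
begin

lemma Gf_lower: "- sin w - (2 + 2*\<bar>lam\<bar>) * sin (th0 s) \<le> Gf a E lam s w"
  using Gf_near[OF aE, of lam s w] by (simp add: abs_le_iff)

lemma Gf_upper: "Gf a E lam s w \<le> - sin w + (2 + 2*\<bar>lam\<bar>) * sin (th0 s)"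
  using Gf_near[OF aE, of lam s w] by (simp add: abs_le_iff)

lemma unstable_exists: "\<exists>y. sol a E lam y \<and> (y \<longlongrightarrow> 0) at_bot"
proof -
  define C where "C = 2 + 2*\<bar>lam\<bar>"
  define A where "A = 2*C"
  define M where "M = 3 + 2*\<bar>lam\<bar>"
  define tau where "tau = ln (1/A)"
  have C0: "0 < C" by (simp add: C_def add_pos_nonneg)
  have A0: "0 < A" using C0 by (simp add: A_def)
  have Gb: "\<bar>Gf a E lam t v\<bar> \<le> M" for t v using Gf_bound[OF aE] by (simp add: M_def)
  have Aexp: "A * exp t \<le> 1" if "t \<le> tau" for t
  proof -
    have "exp t \<le> exp tau" using that by simp
    also have "\<dots> = 1/A" unfolding tau_def using A0 by simp
    finally show ?thesis using A0 by (simp add: field_simps)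
  qed
  have sC: "C * sin (th0 s) \<le> A * exp s" for s
    using sin_th0_le[of s] C0 by (simp add: A_def)
  have "\<forall>n::nat. \<exists>y. y (- real n) = - A * exp (- real n) \<and> (\<forall>b. continuous_on {- real n..b} y) \<and>
             (\<forall>t> - real n. (y has_real_derivative Gf a E lam t (y t)) (at t))"
    using ivp[OF aE] by blast
  then obtain Z where Z: "\<And>n. Z n (- real n) = - A * exp (- real n)"
    "\<And>n b. continuous_on {- real n..b} (Z n)"
    "\<And>n t. t > - real n \<Longrightarrow> (Z n has_real_derivative Gf a E lam t (Z n t)) (at t)"
    by metis
  define N0 where "N0 = nat \<lceil>- tau\<rceil> + 1"
  have N0: "- real n < tau" if "N0 \<le> n" for n
  proof -
    have "- tau \<le> real (nat \<lceil>- tau\<rceil>)" by linarith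
    moreover have "real N0 \<le> real n" using that by simp
    ultimately show ?thesis unfolding N0_def by simp
  qed
  have bnd: "- A * exp t \<le> Z n t \<and> Z n t \<le> A * exp t" if n: "N0 \<le> n" and t: "- real n \<le> t" "t \<le> tau" for n t
  proof
    have cont: "continuous_on {- real n..t} (Z n)" by (rule Z(2))
    have lo: "0 \<le> Z n t + A * exp t"
    proof (rule compare[where K=3 and D="\<lambda>s. Z n s + A * exp s" and D'="\<lambda>s. Gf a E lam s (Z n s) + A * exp s" and a="- real n" and b=t])
      show "- real n \<le> t" by (rule t)
      show "continuous_on {- real n..t} (\<lambda>s. Z n s + A * exp s)" by (intro continuous_intros cont)
      show "\<forall>s\<in>{- real n<..t}. ((\<lambda>s. Z n s + A * exp s) has_real_derivative Gf a E lam s (Z n s) + A * exp s) (at s)"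
        by (auto intro!: derivative_eq_intros Z(3))
      show "0 \<le> Z n (- real n) + A * exp (- real n)" using Z(1) by simp
      show "\<forall>s\<in>{- real n<..t}. Z n s + A * exp s < 0 \<longrightarrow> 3 * (Z n s + A * exp s) \<le> Gf a E lam s (Z n s) + A * exp s"
      proof (intro ballI impI)
        fix s assume s: "s \<in> {- real n<..t}" and neg: "Z n s + A * exp s < 0"
        define w where "w = - A * exp s"
        have w: "-1 \<le> w" "w \<le> 0" using Aexp[of s] s t A0 by (auto simp: w_def)
        have "0 \<le> sin (- w)" using w by (intro sin_ge_zero) (auto simp: pi_gt3 intro: order_trans[OF _ pi_gt3[THEN less_imp_le]])
        hence "- A * exp s \<le> Gf a E lam s w"
          using Gf_lower[of w lam s] sC[of s] by (simp add: C_def)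
        moreover have "\<bar>Gf a E lam s (Z n s) - Gf a E lam s w\<bar> \<le> 3 * \<bar>Z n s - w\<bar>" by (rule Gf_lip[OF aE])
        ultimately show "3 * (Z n s + A * exp s) \<le> Gf a E lam s (Z n s) + A * exp s"
          using neg by (simp add: w_def abs_le_iff)
      qed
    qed
    thus "- A * exp t \<le> Z n t" by simp
    have up: "0 \<le> A * exp t - Z n t"
    proof (rule compare[where K=3 and D="\<lambda>s. A * exp s - Z n s" and D'="\<lambda>s. A * exp s - Gf a E lam s (Z n s)" and a="- real n" and b=t])
      show "- real n \<le> t" by (rule t)
      show "continuous_on {- real n..t} (\<lambda>s. A * exp s - Z n s)" by (intro continuous_intros cont)
      show "\<forall>s\<in>{- real n<..t}. ((\<lambda>s. A * exp s - Z n s) has_real_derivative A * exp s - Gf a E lam s (Z n s)) (at s)"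
        by (auto intro!: derivative_eq_intros Z(3))
      show "0 \<le> A * exp (- real n) - Z n (- real n)" using Z(1) A0 by simp
      show "\<forall>s\<in>{- real n<..t}. A * exp s - Z n s < 0 \<longrightarrow> 3 * (A * exp s - Z n s) \<le> A * exp s - Gf a E lam s (Z n s)"
      proof (intro ballI impI)
        fix s assume s: "s \<in> {- real n<..t}" and neg: "A * exp s - Z n s < 0"
        define w where "w = A * exp s"
        have w: "0 \<le> w" "w \<le> 1" using Aexp[of s] s t A0 by (auto simp: w_def)
        have "0 \<le> sin w" using w by (intro sin_ge_zero) (auto intro: order_trans[OF _ pi_gt3[THEN less_imp_le]])
        hence "Gf a E lam s w \<le> A * exp s"
          using Gf_upper[of lam s w] sC[of s] by (simp add: C_def)
        moreover have "\<bar>Gf a E lam s (Z n s) - Gf a E lam s w\<bar> \<le> 3 * \<bar>Z n s - w\<bar>" by (rule Gf_lip[OF aE])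
        ultimately show "3 * (A * exp s - Z n s) \<le> A * exp s - Gf a E lam s (Z n s)"
          using neg by (simp add: w_def abs_le_iff)
      qed
    qed
    thus "Z n t \<le> A * exp t" by simp
  qed
  have mono: "Z n t \<le> Z (Suc n) t" if n: "N0 \<le> n" and t: "- real n \<le> t" for n t
  proof -
    have "0 \<le> Z (Suc n) t - Z n t"
    proof (rule compare[where K=3 and D="\<lambda>s. Z (Suc n) s - Z n s" and D'="\<lambda>s. Gf a E lam s (Z (Suc n) s) - Gf a E lam s (Z n s)" and a="- real n" and b=t])
      show "- real n \<le> t" by (rule t)
      have "continuous_on {- real (Suc n)..t} (Z (Suc n))" by (rule Z(2))
      hence "continuous_on {- real n..t} (Z (Suc n))" by (rule continuous_on_subset) auto
      thus "continuous_on {- real n..t} (\<lambda>s. Z (Suc n) s - Z n s)" by (intro continuous_intros Z(2))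
      show "\<forall>s\<in>{- real n<..t}. ((\<lambda>s. Z (Suc n) s - Z n s) has_real_derivative Gf a E lam s (Z (Suc n) s) - Gf a E lam s (Z n s)) (at s)"
        by (auto intro!: derivative_eq_intros Z(3))
      have "- A * exp (- real n) \<le> Z (Suc n) (- real n)" using bnd[of "Suc n" "- real n"] n N0[OF n] by simp
      thus "0 \<le> Z (Suc n) (- real n) - Z n (- real n)" using Z(1)[of n] by simp
      show "\<forall>s\<in>{- real n<..t}. Z (Suc n) s - Z n s < 0 \<longrightarrow> 3 * (Z (Suc n) s - Z n s) \<le> Gf a E lam s (Z (Suc n) s) - Gf a E lam s (Z n s)"
      proof (intro ballI impI)
        fix s assume "Z (Suc n) s - Z n s < 0"
        moreover have "\<bar>Gf a E lam s (Z (Suc n) s) - Gf a E lam s (Z n s)\<bar> \<le> 3 * \<bar>Z (Suc n) s - Z n s\<bar>" by (rule Gf_lip[OF aE])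
        ultimately show "3 * (Z (Suc n) s - Z n s) \<le> Gf a E lam s (Z (Suc n) s) - Gf a E lam s (Z n s)"
          by (simp add: abs_le_iff)
      qed
    qed
    thus ?thesis by simp
  qed
  have ub: "Z n t \<le> 1 + M * \<bar>t - tau\<bar>" if n: "N0 \<le> n" and t: "- real n \<le> t" for n t
  proof (cases "t \<le> tau")
    case True
    hence "Z n t \<le> 1" using bnd[OF n t True] Aexp[OF True] by linarith
    moreover have "0 \<le> M * \<bar>t - tau\<bar>" by (simp add: M_def)
    ultimately show ?thesis by linarith
  next
    case False
    have tn: "- real n < tau" by (rule N0[OF n])
    have dd: "(Z n has_real_derivative Gf a E lam x (Z n x)) (at x)" if "tau \<le> x" "x \<le> t" for x
      using that tn by (intro Z(3)) simp
    have "tau < t" using False by simp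
    obtain xi where xi: "tau < xi" "xi < t" "Z n t - Z n tau = (t - tau) * Gf a E lam xi (Z n xi)"
      using MVT2[of tau t "Z n" "\<lambda>x. Gf a E lam x (Z n x)", OF \<open>tau < t\<close> dd] by blast
    have m1: "(t - tau) * Gf a E lam xi (Z n xi) \<le> (t - tau) * M"
      using Gb[of xi "Z n xi"] False by (intro mult_left_mono) auto
    have m2: "Z n tau \<le> 1" using bnd[OF n _ order_refl] tn Aexp[of tau] by force
    have m3: "\<bar>t - tau\<bar> = t - tau" using False by simp
    show ?thesis unfolding m3 using m1 m2 xi(3) by (simp add: mult.commute)
  qed
  define Nf where "Nf t = max N0 (nat \<lceil>- t\<rceil> + 1)" for t :: real
  have Nf: "N0 \<le> n" "- real n < t" if "Nf t \<le> n" for t :: real and n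
  proof -
    show "N0 \<le> n" using that by (simp add: Nf_def)
    have "- t \<le> real (nat \<lceil>- t\<rceil>)" by linarith
    moreover have "real (nat \<lceil>- t\<rceil> + 1) \<le> real n" using that by (simp add: Nf_def)
    ultimately show "- real n < t" by simp
  qed
  have conv0: "convergent (\<lambda>n. Z n t)" for t
  proof -
    have inc: "incseq (\<lambda>k. Z (k + Nf t) t)"
    proof (rule incseq_SucI)
      fix k
      have "Nf t \<le> k + Nf t" by simp
      from Nf[OF this] show "Z (k + Nf t) t \<le> Z (Suc k + Nf t) t" using mono[of "k + Nf t" t] by simp
    qed
    have bdd: "bdd_above (range (\<lambda>k. Z (k + Nf t) t))"
    proof (rule bdd_aboveI)
      fix x assume "x \<in> range (\<lambda>k. Z (k + Nf t) t)"
      then obtain k where x: "x = Z (k + Nf t) t" by auto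
      have "Nf t \<le> k + Nf t" by simp
      from Nf[OF this] show "x \<le> 1 + M * \<bar>t - tau\<bar>" unfolding x by (intro ub) auto
    qed
    have "(\<lambda>k. Z (k + Nf t) t) \<longlonglongrightarrow> Sup (range (\<lambda>k. Z (k + Nf t) t))"
      by (rule LIMSEQ_incseq_SUP[OF bdd inc])
    hence "(\<lambda>n. Z n t) \<longlonglongrightarrow> Sup (range (\<lambda>k. Z (k + Nf t) t))" by (rule LIMSEQ_offset)
    thus ?thesis by (rule convergentI)
  qed
  define Zl where "Zl t = lim (\<lambda>n. Z n t)" for t
  have conv: "(\<lambda>n. Z n t) \<longlonglongrightarrow> Zl t" for t
    unfolding Zl_def using conv0 by (simp add: convergent_LIMSEQ_iff)
  have convs: "(\<lambda>k. Z (k + N) t) \<longlonglongrightarrow> Zl t" for N t by (rule LIMSEQ_ignore_initial_segment[OF conv])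
  have inteq: "((\<lambda>r. Gf a E lam r (Zl r)) has_integral (Zl t - Zl s)) {s..t}" if st: "s \<le> t" for s t
  proof (rule has_integral_dominated_convergence[where h="\<lambda>r. M"
        and f="\<lambda>k r. Gf a E lam r (Z (k + Nf s) r)" and y="\<lambda>k. Z (k + Nf s) t - Z (k + Nf s) s"])
    fix k
    have "Nf s \<le> k + Nf s" by simp
    note nn = Nf[OF this]
    show "((\<lambda>r. Gf a E lam r (Z (k + Nf s) r)) has_integral Z (k + Nf s) t - Z (k + Nf s) s) {s..t}"
    proof (rule fundamental_theorem_of_calculus_interior[OF st])
      have "continuous_on {- real (k + Nf s)..t} (Z (k + Nf s))" by (rule Z(2))
      thus "continuous_on {s..t} (Z (k + Nf s))" by (rule continuous_on_subset) (use nn in auto)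
      fix x assume "x \<in> {s<..<t}"
      hence "x > - real (k + Nf s)" using nn by auto
      thus "(Z (k + Nf s) has_vector_derivative Gf a E lam x (Z (k + Nf s) x)) (at x)"
        using Z(3) by (simp add: has_real_derivative_iff_has_vector_derivative)
    qed
  next
    show "(\<lambda>r. M) integrable_on {s..t}" by (rule integrable_const_ivl)
  next
    fix k show "\<forall>x\<in>{s..t}. norm (Gf a E lam x (Z (k + Nf s) x)) \<le> M" using Gb by simp
  next
    show "\<forall>x\<in>{s..t}. (\<lambda>k. Gf a E lam x (Z (k + Nf s) x)) \<longlonglongrightarrow> Gf a E lam x (Zl x)"
      by (intro ballI Gf_tendsto convs)
  next
    show "(\<lambda>k. Z (k + Nf s) t - Z (k + Nf s) s) \<longlonglongrightarrow> Zl t - Zl s"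
      by (intro tendsto_diff convs)
  qed
  have inteq': "\<forall>t. x - 1 \<le> t \<longrightarrow> t \<le> x + 1 \<longrightarrow> Zl t = Zl (x - 1) + integral {x - 1..t} (\<lambda>r. Gf a E lam r (Zl r))" for x
  proof (intro allI impI)
    fix t assume "x - 1 \<le> t"
    from integral_unique[OF inteq[OF this]]
    show "Zl t = Zl (x - 1) + integral {x - 1..t} (\<lambda>r. Gf a E lam r (Zl r))" by simp
  qed
  have Zlc: "continuous_on UNIV Zl"
  proof (rule continuous_at_imp_continuous_on, intro ballI)
    fix x :: real
    have "(\<lambda>r. Gf a E lam r (Zl r)) integrable_on {x - 1..x + 1}" using inteq[of "x - 1" "x + 1"] by auto
    hence "continuous_on {x - 1..x + 1} Zl" by (rule inteq_cont[OF inteq'])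
    thus "isCont Zl x" by (rule continuous_on_interior) auto
  qed
  have sol: "sol a E lam Zl"
    unfolding sol_def
  proof
    fix x :: real
    have "continuous_on {x - 1..x + 1} (\<lambda>r. Gf a E lam r (Zl r))"
      by (rule Gf_cont) (rule continuous_on_subset[OF Zlc], simp)
    thus "(Zl has_real_derivative Gf a E lam x (Zl x)) (at x)"
      by (rule inteq_deriv[OF inteq']) auto
  qed
  have zb: "- A * exp t \<le> Zl t \<and> Zl t \<le> A * exp t" if t: "t \<le> tau" for t
  proof
    have ev: "eventually (\<lambda>n. - A * exp t \<le> Z n t \<and> Z n t \<le> A * exp t) sequentially"
      unfolding eventually_sequentially
    proof (intro exI allI impI)
      fix n assume "Nf t \<le> n"
      from Nf[OF this] show "- A * exp t \<le> Z n t \<and> Z n t \<le> A * exp t" using bnd t by simp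
    qed
    show "- A * exp t \<le> Zl t" by (rule tendsto_lowerbound[OF conv]) (use ev in \<open>auto elim: eventually_mono\<close>)
    show "Zl t \<le> A * exp t" by (rule tendsto_upperbound[OF conv]) (use ev in \<open>auto elim: eventually_mono\<close>)
  qed
  have "(Zl \<longlongrightarrow> 0) at_bot"
  proof (rule tendsto_sandwich[where f="\<lambda>t. - A * exp t" and h="\<lambda>t. A * exp t"])
    have ev: "eventually (\<lambda>t. t \<le> tau) at_bot" by (rule eventually_le_at_bot)
    show "eventually (\<lambda>t. - A * exp t \<le> Zl t) at_bot" using ev by eventually_elim (use zb in blast)
    show "eventually (\<lambda>t. Zl t \<le> A * exp t) at_bot" using ev by eventually_elim (use zb in blast)
    have "((\<lambda>t. A * exp t) \<longlongrightarrow> A * 0) at_bot" by (intro tendsto_intros exp_at_bot)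
    thus "((\<lambda>t. A * exp t) \<longlongrightarrow> 0) at_bot" by simp
    have "((\<lambda>t. - A * exp t) \<longlongrightarrow> - A * 0) at_bot" by (intro tendsto_intros exp_at_bot)
    thus "((\<lambda>t. - A * exp t) \<longlongrightarrow> 0) at_bot" by simp
  qed
  thus ?thesis using sol by blast
qed

end



lemma shift_top: "filterlim (\<lambda>x::real. x + c) at_top at_top"
  unfolding filterlim_at_top
proof
  fix Z :: real
  show "eventually (\<lambda>x. Z \<le> x + c) at_top"
    using eventually_ge_at_top[of "Z - c"] by eventually_elim simp
qed

lemma shift_bot: "filterlim (\<lambda>x::real. x + c) at_bot at_bot"
  unfolding filterlim_at_bot
proof
  fix Z :: real
  show "eventually (\<lambda>x. x + c \<le> Z) at_bot"
    using eventually_le_at_bot[of "Z - c"] by eventually_elim simp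
qed

lemma tendsto_shift_top: "((f::real \<Rightarrow> 'b::topological_space) \<longlongrightarrow> L) at_top \<Longrightarrow> ((\<lambda>t. f (t + c)) \<longlongrightarrow> L) at_top"
  by (rule filterlim_compose[OF _ shift_top])

lemma tendsto_shift_bot: "((f::real \<Rightarrow> 'b::topological_space) \<longlongrightarrow> L) at_bot \<Longrightarrow> ((\<lambda>t. f (t + c)) \<longlongrightarrow> L) at_bot"
  by (rule filterlim_compose[OF _ shift_bot])

lemma tendsto_unshift_top: "((\<lambda>t. (f::real \<Rightarrow> 'b::topological_space) (t + c)) \<longlongrightarrow> L) at_top \<Longrightarrow> (f \<longlongrightarrow> L) at_top"
  using tendsto_shift_top[of "\<lambda>t. f (t + c)" L "- c"] by simp

lemma tendsto_unshift_bot: "((\<lambda>t. (f::real \<Rightarrow> 'b::topological_space) (t + c)) \<longlongrightarrow> L) at_bot \<Longrightarrow> (f \<longlongrightarrow> L) at_bot"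
  using tendsto_shift_bot[of "\<lambda>t. f (t + c)" L "- c"] by simp

lemma vd_fst: "(g has_vector_derivative v) F \<Longrightarrow> ((\<lambda>x. fst (g x)) has_vector_derivative fst v) F"
  unfolding has_vector_derivative_def by (drule has_derivative_fst) simp

lemma vd_snd: "(g has_vector_derivative v) F \<Longrightarrow> ((\<lambda>x. snd (g x)) has_vector_derivative snd v) F"
  unfolding has_vector_derivative_def by (drule has_derivative_snd) simp

lemma sol_strip: "sol a E lam y \<Longrightarrow> strip_solution a E lam (\<lambda>t. (th0 t, y t))"
  unfolding strip_solution_def sol_def
proof (intro conjI allI)
  fix t assume "\<forall>t. (y has_real_derivative Gf a E lam t (y t)) (at t)"
  hence d: "(y has_vector_derivative Gf a E lam t (y t)) (at t)"
    by (simp add: has_real_derivative_iff_has_vector_derivative)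
  have "(th0 has_vector_derivative sin (th0 t)) (at t)"
    using th0_deriv by (simp add: has_real_derivative_iff_has_vector_derivative)
  from has_vector_derivative_Pair[OF this d]
  show "((\<lambda>t. (th0 t, y t)) has_vector_derivative theta_field a E lam (th0 t, y t)) (at t)"
    by (simp add: theta_field_th0)
qed (use th0_bounds in auto)

lemma strip_sol:
  assumes "strip_solution a E lam g"
  shows "\<exists>c y. sol a E lam y \<and> (\<forall>t. g t = (th0 (t + c), y (t + c)))"
proof -
  have dg: "\<And>t. (g has_vector_derivative theta_field a E lam (g t)) (at t)"
    and pos: "\<And>t. 0 < fst (g t)" "\<And>t. fst (g t) < pi"
    using assms unfolding strip_solution_def by auto
  define th where "th t = fst (g t)" for t
  have fstf: "fst (theta_field a E lam p) = sin (fst p)" for p by (simp add: theta_field_def Let_def)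
  have dth: "(th has_real_derivative sin (th t)) (at t)" for t
    using vd_fst[OF dg[of t]] by (simp add: th_def[abs_def] fstf has_real_derivative_iff_has_vector_derivative)
  have hb: "0 < th t / 2" "th t / 2 < pi / 2" for t using pos[of t] by (auto simp: th_def)
  have cpos: "0 < cos (th t / 2)" for t using hb[of t] by (intro cos_gt_zero_pi) auto
  have spos: "0 < sin (th t / 2)" for t using hb[of t] by (intro sin_gt_zero) auto
  have tpos: "0 < tan (th t / 2)" for t using hb[of t] by (intro tan_gt_zero) auto
  define gg where "gg t = ln (tan (th t / 2)) - t" for t
  have dgg: "(gg has_real_derivative 0) (at t)" for t
  proof -
    have d1: "((\<lambda>t. th t / 2) has_real_derivative sin (th t) / 2) (at t)" by (rule DERIV_cdivide[OF dth])
    have d2: "((\<lambda>t. tan (th t / 2)) has_real_derivative inverse ((cos (th t / 2))\<^sup>2) * (sin (th t) / 2)) (at t)"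
      by (rule DERIV_chain2[OF DERIV_tan d1]) (use cpos[of t] in simp)
    have d3: "((\<lambda>t. ln (tan (th t / 2))) has_real_derivative inverse (tan (th t / 2)) * (inverse ((cos (th t / 2))\<^sup>2) * (sin (th t) / 2))) (at t)"
      by (rule DERIV_chain2[OF DERIV_ln d2]) (rule tpos)
    have "inverse (tan (th t / 2)) * (inverse ((cos (th t / 2))\<^sup>2) * (sin (th t) / 2)) = 1"
    proof -
      have "sin (th t) = 2 * sin (th t / 2) * cos (th t / 2)"
        using sin_double[of "th t / 2"] by simp
      thus ?thesis using cpos[of t] spos[of t] by (simp add: tan_def field_simps power2_eq_square)
    qed
    with d3 have d4: "((\<lambda>t. ln (tan (th t / 2))) has_real_derivative 1) (at t)" by simp
    show ?thesis unfolding gg_def[abs_def] using DERIV_diff[OF d4 DERIV_ident] by simp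
  qed
  define c where "c = gg 0"
  have ggc: "gg t = c" for t unfolding c_def by (rule DERIV_isconst_all) (use dgg in blast)
  have thc: "th t = th0 (t + c)" for t
  proof -
    have "ln (tan (th t / 2)) = t + c" using ggc[of t] by (simp add: gg_def)
    hence "tan (th t / 2) = exp (t + c)" using tpos[of t] by (metis exp_ln)
    hence "arctan (exp (t + c)) = th t / 2" using hb[of t] by (metis arctan_tan less_trans neg_less_0_iff_less pi_half_gt_zero)
    thus ?thesis by (simp add: th0_def)
  qed
  define y where "y s = snd (g (s - c))" for s
  have geq: "g t = (th0 (t + c), y (t + c))" for t
    using thc[of t] by (simp add: y_def th_def prod_eq_iff)
  have "sol a E lam y" unfolding sol_def
  proof
    fix s
    have dsh: "((\<lambda>s. s - c) has_vector_derivative 1) (at s)"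
      by (auto intro!: derivative_eq_intros simp: has_real_derivative_iff_has_vector_derivative[symmetric])
    have "(g \<circ> (\<lambda>s. s - c) has_vector_derivative 1 *\<^sub>R theta_field a E lam (g (s - c))) (at s)"
      by (rule vector_diff_chain_at[OF dsh dg])
    hence "((\<lambda>s. g (s - c)) has_vector_derivative theta_field a E lam (g (s - c))) (at s)"
      by (simp add: o_def)
    from vd_snd[OF this]
    have "(y has_vector_derivative snd (theta_field a E lam (g (s - c)))) (at s)"
      by (simp add: y_def[abs_def])
    moreover have "g (s - c) = (th0 s, y s)" using geq[of "s - c"] by simp
    ultimately show "(y has_real_derivative Gf a E lam s (y s)) (at s)"
      by (simp add: theta_field_th0 has_real_derivative_iff_has_vector_derivative)
  qed
  thus ?thesis using geq by blast
qed

context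
  fixes a E :: real
  assumes aE: "0 < a" "a < 1/2" "0 \<le> E" "E \<le> 1"
begin

lemma unstable_unique:
  assumes "sol a E lam y" "(y \<longlongrightarrow> 0) at_bot" "sol a E lam z" "(z \<longlongrightarrow> 0) at_bot"
  shows "y = z"
proof
  fix t
  show "y t = z t"
    using unstable_order[OF aE assms(1,3) order_refl assms(2,4)] unstable_order[OF aE assms(3,1) order_refl assms(4,2)]
    by (meson order_antisym)
qed

lemma range_shift: "range (\<lambda>t. (th0 (t + c), y (t + c))) = range (\<lambda>t. (th0 t, y t))"
proof
  show "range (\<lambda>t. (th0 (t + c), y (t + c))) \<subseteq> range (\<lambda>t. (th0 t, y t))" by auto
  show "range (\<lambda>t. (th0 t, y t)) \<subseteq> range (\<lambda>t. (th0 (t + c), y (t + c)))"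
  proof
    fix p assume "p \<in> range (\<lambda>t. (th0 t, y t))"
    then obtain t where "p = (th0 t, y t)" by auto
    hence "p = (th0 ((t - c) + c), y ((t - c) + c))" by simp
    thus "p \<in> range (\<lambda>t. (th0 (t + c), y (t + c)))" by blast
  qed
qed

lemma W_minus_eq:
  assumes sy: "sol a E lam y" and ly: "(y \<longlongrightarrow> 0) at_bot"
  shows "W_minus a E lam = range (\<lambda>t. (th0 t, y t))"
  unfolding W_minus_def
proof (rule the_equality)
  have "((\<lambda>t. (th0 t, y t)) \<longlongrightarrow> (0, 0)) at_bot" by (intro tendsto_Pair th0_bot ly)
  thus "\<exists>g. strip_solution a E lam g \<and> alpha_limit_is g (0, 0) \<and> range (\<lambda>t. (th0 t, y t)) = range g"
    using sol_strip[OF sy] unfolding alpha_limit_is_def by blast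
next
  fix S assume "\<exists>g. strip_solution a E lam g \<and> alpha_limit_is g (0, 0) \<and> S = range g"
  then obtain g where g: "strip_solution a E lam g" "(g \<longlongrightarrow> (0,0)) at_bot" "S = range g"
    unfolding alpha_limit_is_def by blast
  obtain c z where z: "sol a E lam z" "\<forall>t. g t = (th0 (t + c), z (t + c))" using strip_sol[OF g(1)] by blast
  have "((\<lambda>t. snd (g t)) \<longlongrightarrow> snd (0::real, 0::real)) at_bot" by (rule tendsto_snd[OF g(2)])
  hence "((\<lambda>t. z (t + c)) \<longlongrightarrow> 0) at_bot" using z(2) by simp
  hence lz: "(z \<longlongrightarrow> 0) at_bot" by (rule tendsto_unshift_bot)
  have "z = y" by (rule unstable_unique[OF z(1) lz sy ly])
  have "g = (\<lambda>t. (th0 (t + c), y (t + c)))" using z(2) \<open>z = y\<close> by auto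
  thus "S = range (\<lambda>t. (th0 t, y t))" using g(3) range_shift by simp
qed

lemma corridor_lim:
  assumes sy: "sol a E lam y" and ly: "(y \<longlongrightarrow> 0) at_bot" and hc: "has_corridor a E lam k"
  shows "(y \<longlongrightarrow> - 2 * pi * of_int k) at_top"
proof -
  obtain g where g: "strip_solution a E lam g" "range g = W_minus a E lam"
      "(g \<longlongrightarrow> (pi, - 2 * pi * of_int k)) at_top"
    using hc unfolding has_corridor_def omega_limit_is_def by blast
  obtain c z where z: "sol a E lam z" "\<forall>t. g t = (th0 (t + c), z (t + c))" using strip_sol[OF g(1)] by blast
  have zy: "z s = y s" for s
  proof -
    have "g (s - c) \<in> range (\<lambda>t. (th0 t, y t))" using g(2) W_minus_eq[OF sy ly] by blast
    then obtain u where "(th0 s, z s) = (th0 u, y u)" using z(2)[rule_format, of "s - c"] by auto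
    hence "th0 s = th0 u" "z s = y u" by auto
    thus ?thesis using th0_inj by blast
  qed
  have "((\<lambda>t. snd (g t)) \<longlongrightarrow> snd (pi, - 2 * pi * of_int k)) at_top" by (rule tendsto_snd[OF g(3)])
  hence "((\<lambda>t. y (t + c)) \<longlongrightarrow> - 2 * pi * of_int k) at_top" using z(2) zy by simp
  thus ?thesis by (rule tendsto_unshift_top)
qed

lemma connector_of:
  assumes sy: "sol a E lam y" and ly: "(y \<longlongrightarrow> 0) at_bot" and ty: "(y \<longlongrightarrow> - pi) at_top"
  shows "saddles_connector a E lam"
proof -
  have "((\<lambda>t. (th0 t, y t)) \<longlongrightarrow> (0, 0)) at_bot" by (intro tendsto_Pair th0_bot ly)
  moreover have "((\<lambda>t. (th0 t, y t)) \<longlongrightarrow> (pi, - pi)) at_top" by (intro tendsto_Pair th0_top ty)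
  ultimately show ?thesis using sol_strip[OF sy]
    unfolding saddles_connector_def alpha_limit_is_def omega_limit_is_def by blast
qed

end



lemma exp_neg_top: "((\<lambda>t::real. exp (- t)) \<longlongrightarrow> 0) at_top"
  by (rule filterlim_compose[OF exp_at_bot filterlim_uminus_at_bot_at_top])

lemma sin_mpi: "sin (- pi - x) = sin x" by (simp add: sin_diff)

context
  fixes a E :: real
  assumes aE: "0 < a" "a < 1/2" "0 \<le> E" "E \<le> 1"
begin

lemma main:
  assumes l12: "lam1 < lam2" "lam2 < 0"
    and s1: "sol a E lam1 y1" "(y1 \<longlongrightarrow> 0) at_bot" "(y1 \<longlongrightarrow> - 2 * pi * of_int k1) at_top" and k1: "k1 \<ge> 1"
    and s2: "sol a E lam2 y2" "(y2 \<longlongrightarrow> 0) at_bot" "(y2 \<longlongrightarrow> 0) at_top"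
  shows "\<exists>lam. lam1 < lam \<and> lam < lam2 \<and> saddles_connector a E lam"
proof -
  define Y where "Y l = (SOME y. sol a E l y \<and> (y \<longlongrightarrow> 0) at_bot)" for l
  have YP: "sol a E l (Y l) \<and> (Y l \<longlongrightarrow> 0) at_bot" for l
    unfolding Y_def by (rule someI_ex[OF unstable_exists[OF aE]])
  have Y1: "Y lam1 = y1" using YP[of lam1] s1 by (intro unstable_unique[OF aE]) auto
  have Y2: "Y lam2 = y2" using YP[of lam2] s2 by (intro unstable_unique[OF aE]) auto
  define I where "I = {lam1..lam2}"
  have ord: "y1 t \<le> Y l t \<and> Y l t \<le> y2 t" if "l \<in> I" for l t
  proof
    show "y1 t \<le> Y l t" using unstable_order[OF aE s1(1) conjunct1[OF YP[of l]] _ s1(2) conjunct2[OF YP[of l]]] that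
      by (simp add: I_def)
    show "Y l t \<le> y2 t" using unstable_order[OF aE conjunct1[OF YP[of l]] s2(1) _ conjunct2[OF YP[of l]] s2(2)] that
      by (simp add: I_def)
  qed
  obtain T0 where T0: "\<forall>t\<le>T0. \<bar>y1 t\<bar> \<le> 1 \<and> \<bar>y2 t\<bar> \<le> 1 \<and> sin (th0 t) \<le> 1/10"
    using eventually_small[OF s1(2) s2(2)] by blast
  have bd: "\<bar>Y l t\<bar> \<le> 1" if "l \<in> I" "t \<le> T0" for l t
    using ord[OF that(1), of t] T0 that(2) by (auto simp: abs_le_iff)
  define K where "K t = 10 * exp (3 * \<bar>t - T0\<bar>)" for t
  have K0: "0 < K t" for t by (simp add: K_def)
  have lip1: "Y m t - Y l t \<le> K t * (m - l)" if "l \<in> I" "m \<in> I" "l \<le> m" for l m t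
  proof -
    have "\<forall>t\<le>T0. \<bar>Y l t\<bar> \<le> 1 \<and> \<bar>Y m t\<bar> \<le> 1 \<and> sin (th0 t) \<le> 1/10" using bd that T0 by blast
    from unstable_lip[OF aE conjunct1[OF YP[of l]] conjunct1[OF YP[of m]] that(3) conjunct2[OF YP[of l]] conjunct2[OF YP[of m]] this, where t=t]
    show ?thesis by (simp add: K_def algebra_simps)
  qed
  have lip: "\<bar>Y m t - Y l t\<bar> \<le> K t * \<bar>m - l\<bar>" if "l \<in> I" "m \<in> I" for l m t
  proof (cases "l \<le> m")
    case True
    have "Y l t \<le> Y m t"
      using unstable_order[OF aE conjunct1[OF YP[of l]] conjunct1[OF YP[of m]] True conjunct2[OF YP[of l]] conjunct2[OF YP[of m]]] .
    thus ?thesis using lip1[OF that True, of t] True by simp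
  next
    case False
    hence ml: "m \<le> l" by simp
    have "Y m t \<le> Y l t"
      using unstable_order[OF aE conjunct1[OF YP[of m]] conjunct1[OF YP[of l]] ml conjunct2[OF YP[of m]] conjunct2[OF YP[of l]]] .
    thus ?thesis using lip1[OF that(2,1) ml, of t] ml by simp
  qed
  define C where "C = 2 + 2 * \<bar>lam1\<bar>"
  have C0: "0 < C" by (simp add: C_def add_pos_nonneg)
  have Cl: "2 + 2 * \<bar>l\<bar> \<le> C" if "l \<in> I" for l using that l12 by (simp add: I_def C_def)
  define hA where "hA = 4 * C"
  define h where "h t = hA * exp (- t)" for t
  define T1 where "T1 = ln hA"
  have hA0: "0 < hA" using C0 by (simp add: hA_def)
  have h0: "0 < h t" for t using hA0 by (simp add: h_def)
  have h1: "h t \<le> 1" if "T1 \<le> t" for t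
  proof -
    have "exp (- t) \<le> exp (- T1)" using that by simp
    also have "\<dots> = 1 / hA" using hA0 by (simp add: T1_def exp_minus inverse_eq_divide)
    finally show ?thesis using hA0 by (simp add: h_def field_simps)
  qed
  have sC: "C * sin (th0 s) \<le> 2 * C * exp (- s)" for s using sin_th0_le'[of s] C0 by simp
  have up: "0 < Y l t2 + pi - h t2" if l: "l \<in> I" and t: "T1 \<le> t1" "t1 \<le> t2" and p: "0 < Y l t1 + pi - h t1" for l t1 t2
  proof (rule barrier[where f="\<lambda>s. Y l s + pi - h s" and f'="\<lambda>s. Gf a E l s (Y l s) + hA * exp (- s)" and a=t1 and b=t2])
    have dY: "\<forall>s. (Y l has_real_derivative Gf a E l s (Y l s)) (at s)" using YP[of l] by (simp add: sol_def)
    have d: "((\<lambda>s. Y l s + pi - h s) has_real_derivative Gf a E l s (Y l s) + hA * exp (- s)) (at s)" for s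
      unfolding h_def using dY by (auto intro!: derivative_eq_intros)
    show "t1 \<le> t2" by (rule t)
    show "continuous_on {t1..t2} (\<lambda>s. Y l s + pi - h s)" by (rule deriv_cont_on[where f'="\<lambda>s. Gf a E l s (Y l s) + hA * exp (- s)"]) (use d in blast)
    show "\<forall>s\<in>{t1<..t2}. ((\<lambda>s. Y l s + pi - h s) has_real_derivative Gf a E l s (Y l s) + hA * exp (- s)) (at s)"
      using d by blast
    show "0 < Y l t1 + pi - h t1" by (rule p)
    show "\<forall>s\<in>{t1<..t2}. Y l s + pi - h s = 0 \<longrightarrow> 0 < Gf a E l s (Y l s) + hA * exp (- s)"
    proof (intro ballI impI)
      fix s assume s: "s \<in> {t1<..t2}" and z: "Y l s + pi - h s = 0"
      hence Ys: "Y l s = - pi + h s" by simp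
      have "0 \<le> h s" "h s \<le> pi" using h0[of s] h1[of s] s t pi_gt3 by auto
      hence "0 \<le> sin (h s)" by (rule sin_ge_zero)
      moreover have "sin (- pi + h s) = - sin (h s)" by (simp add: sin_add)
      moreover have "- sin (Y l s) - (2 + 2*\<bar>l\<bar>) * sin (th0 s) \<le> Gf a E l s (Y l s)" by (rule Gf_lower[OF aE])
      moreover have "(2 + 2*\<bar>l\<bar>) * sin (th0 s) \<le> C * sin (th0 s)"
        using Cl[OF l] sin_th0_pos[of s] by (intro mult_right_mono) auto
      ultimately have "- 2 * C * exp (- s) \<le> Gf a E l s (Y l s)" using sC[of s] Ys by simp
      moreover have "0 < C * exp (- s)" using C0 by simp
      ultimately show "0 < Gf a E l s (Y l s) + hA * exp (- s)" by (simp add: hA_def)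
    qed
  qed
  have lo: "0 < - (Y l t2 + pi + h t2)" if l: "l \<in> I" and t: "T1 \<le> t1" "t1 \<le> t2" and p: "0 < - (Y l t1 + pi + h t1)" for l t1 t2
  proof (rule barrier[where f="\<lambda>s. - (Y l s + pi + h s)" and f'="\<lambda>s. - Gf a E l s (Y l s) + hA * exp (- s)" and a=t1 and b=t2])
    have dY: "\<forall>s. (Y l has_real_derivative Gf a E l s (Y l s)) (at s)" using YP[of l] by (simp add: sol_def)
    have d: "((\<lambda>s. - (Y l s + pi + h s)) has_real_derivative - Gf a E l s (Y l s) + hA * exp (- s)) (at s)" for s
      unfolding h_def using dY by (auto intro!: derivative_eq_intros)
    show "t1 \<le> t2" by (rule t)
    show "continuous_on {t1..t2} (\<lambda>s. - (Y l s + pi + h s))" by (rule deriv_cont_on[where f'="\<lambda>s. - Gf a E l s (Y l s) + hA * exp (- s)"]) (use d in blast)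
    show "\<forall>s\<in>{t1<..t2}. ((\<lambda>s. - (Y l s + pi + h s)) has_real_derivative - Gf a E l s (Y l s) + hA * exp (- s)) (at s)"
      using d by blast
    show "0 < - (Y l t1 + pi + h t1)" by (rule p)
    show "\<forall>s\<in>{t1<..t2}. - (Y l s + pi + h s) = 0 \<longrightarrow> 0 < - Gf a E l s (Y l s) + hA * exp (- s)"
    proof (intro ballI impI)
      fix s assume s: "s \<in> {t1<..t2}" and z: "- (Y l s + pi + h s) = 0"
      hence Ys: "Y l s = - pi - h s" by simp
      have "0 \<le> h s" "h s \<le> pi" using h0[of s] h1[of s] s t pi_gt3 by auto
      hence "0 \<le> sin (h s)" by (rule sin_ge_zero)
      moreover have "sin (Y l s) = sin (h s)" unfolding Ys by (rule sin_mpi)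
      moreover have "Gf a E l s (Y l s) \<le> - sin (Y l s) + (2 + 2*\<bar>l\<bar>) * sin (th0 s)" by (rule Gf_upper[OF aE])
      moreover have "(2 + 2*\<bar>l\<bar>) * sin (th0 s) \<le> C * sin (th0 s)"
        using Cl[OF l] sin_th0_pos[of s] by (intro mult_right_mono) auto
      ultimately have "Gf a E l s (Y l s) \<le> 2 * C * exp (- s)" using sC[of s] by simp
      moreover have "0 < C * exp (- s)" using C0 by simp
      ultimately show "0 < - Gf a E l s (Y l s) + hA * exp (- s)" by (simp add: hA_def)
    qed
  qed
  define Aset where "Aset = {l \<in> I. \<exists>t\<ge>T1. 0 < Y l t + pi - h t}"
  define Bset where "Bset = {l \<in> I. \<exists>t\<ge>T1. 0 < - (Y l t + pi + h t)}"
  have disj: "l \<notin> Bset" if lA: "l \<in> Aset" for l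
  proof
    assume "l \<in> Bset"
    then obtain tb where tb: "T1 \<le> tb" "0 < - (Y l tb + pi + h tb)" and l: "l \<in> I" by (auto simp: Bset_def)
    obtain ta where ta: "T1 \<le> ta" "0 < Y l ta + pi - h ta" using lA by (auto simp: Aset_def)
    define t where "t = max ta tb"
    have "0 < Y l t + pi - h t" using up[OF l ta(1) _ ta(2)] by (simp add: t_def)
    moreover have "0 < - (Y l t + pi + h t)" using lo[OF l tb(1) _ tb(2)] by (simp add: t_def)
    ultimately show False using h0[of t] by simp
  qed
  have hlim: "(h \<longlongrightarrow> 0) at_top"
  proof -
    have "((\<lambda>t. hA * exp (- t)) \<longlongrightarrow> hA * 0) at_top" by (intro tendsto_intros exp_neg_top)
    thus ?thesis by (simp add: h_def[abs_def])
  qed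
  have l2A: "lam2 \<in> Aset"
  proof -
    have "((\<lambda>t. Y lam2 t + pi - h t) \<longlongrightarrow> 0 + pi - 0) at_top"
      unfolding Y2 by (intro tendsto_intros s2(3) hlim)
    hence "eventually (\<lambda>t. 0 < Y lam2 t + pi - h t) at_top" by (rule order_tendstoD) simp
    moreover have "eventually (\<lambda>t. T1 \<le> t) at_top" by (rule eventually_ge_at_top)
    ultimately have "eventually (\<lambda>t. T1 \<le> t \<and> 0 < Y lam2 t + pi - h t) at_top" by eventually_elim simp
    then obtain N where N: "\<forall>t\<ge>N. T1 \<le> t \<and> 0 < Y lam2 t + pi - h t" by (auto simp: eventually_at_top_linorder)
    then obtain t where "T1 \<le> t \<and> 0 < Y lam2 t + pi - h t" by blast
    thus ?thesis using l12 by (auto simp: Aset_def I_def)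
  qed
  have l1B: "lam1 \<in> Bset"
  proof -
    have "((\<lambda>t. - (Y lam1 t + pi + h t)) \<longlongrightarrow> - (- 2 * pi * of_int k1 + pi + 0)) at_top"
      unfolding Y1 by (intro tendsto_intros s1(3) hlim)
    moreover have "0 < - (- 2 * pi * of_int k1 + pi + 0)"
    proof -
      have "1 \<le> real_of_int k1" using k1 by simp
      hence "2 * pi * 1 \<le> 2 * pi * of_int k1" by (intro mult_left_mono) auto
      thus ?thesis using pi_gt3 by simp
    qed
    ultimately have "eventually (\<lambda>t. 0 < - (Y lam1 t + pi + h t)) at_top" by (rule order_tendstoD)
    moreover have "eventually (\<lambda>t. T1 \<le> t) at_top" by (rule eventually_ge_at_top)
    ultimately have "eventually (\<lambda>t. T1 \<le> t \<and> 0 < - (Y lam1 t + pi + h t)) at_top" by eventually_elim simp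
    then obtain N where N: "\<forall>t\<ge>N. T1 \<le> t \<and> 0 < - (Y lam1 t + pi + h t)" by (auto simp: eventually_at_top_linorder)
    then obtain t where "T1 \<le> t \<and> 0 < - (Y lam1 t + pi + h t)" by blast
    thus ?thesis using l12 by (auto simp: Bset_def I_def)
  qed
  have openA: "\<exists>d>0. \<forall>m\<in>I. \<bar>m - l\<bar> < d \<longrightarrow> m \<in> Aset" if lA: "l \<in> Aset" for l
  proof -
    obtain t where t: "T1 \<le> t" "0 < Y l t + pi - h t" and l: "l \<in> I" using lA by (auto simp: Aset_def)
    define d where "d = (Y l t + pi - h t) / K t"
    have d0: "0 < d" using t K0[of t] by (simp add: d_def)
    have "m \<in> Aset" if m: "m \<in> I" "\<bar>m - l\<bar> < d" for m
    proof -
      have "\<bar>Y m t - Y l t\<bar> \<le> K t * \<bar>m - l\<bar>" by (rule lip[OF l m(1)])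
      also have "\<dots> < K t * d" using m(2) K0[of t] by simp
      also have "\<dots> = Y l t + pi - h t" using K0[of t] by (simp add: d_def)
      finally have "0 < Y m t + pi - h t" by (simp add: abs_less_iff)
      thus ?thesis using m t by (auto simp: Aset_def)
    qed
    thus ?thesis using d0 by blast
  qed
  have openB: "\<exists>d>0. \<forall>m\<in>I. \<bar>m - l\<bar> < d \<longrightarrow> m \<in> Bset" if lB: "l \<in> Bset" for l
  proof -
    obtain t where t: "T1 \<le> t" "0 < - (Y l t + pi + h t)" and l: "l \<in> I" using lB by (auto simp: Bset_def)
    define d where "d = - (Y l t + pi + h t) / K t"
    have d0: "0 < d" using t K0[of t] by (simp add: d_def)
    have "m \<in> Bset" if m: "m \<in> I" "\<bar>m - l\<bar> < d" for m
    proof -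
      have "\<bar>Y m t - Y l t\<bar> \<le> K t * \<bar>m - l\<bar>" by (rule lip[OF l m(1)])
      also have "\<dots> < K t * d" using m(2) K0[of t] by simp
      also have "\<dots> = - (Y l t + pi + h t)" using K0[of t] by (simp add: d_def)
      finally have "0 < - (Y m t + pi + h t)" by (simp add: abs_less_iff)
      thus ?thesis using m t by (auto simp: Bset_def)
    qed
    thus ?thesis using d0 by blast
  qed
  define c where "c = Sup Bset"
  have BI: "Bset \<subseteq> I" by (auto simp: Bset_def)
  have bdd: "bdd_above Bset" using BI by (auto simp: I_def intro!: bdd_aboveI[of _ lam2])
  have Bne: "Bset \<noteq> {}" using l1B by blast
  have c1: "lam1 \<le> c" unfolding c_def by (rule cSup_upper[OF l1B bdd])
  have c2: "c \<le> lam2" unfolding c_def by (rule cSup_least[OF Bne]) (use BI in \<open>auto simp: I_def\<close>)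
  have cI: "c \<in> I" using c1 c2 by (simp add: I_def)
  have cB: "c \<notin> Bset"
  proof
    assume cB: "c \<in> Bset"
    have "c \<noteq> lam2" using cB disj[OF l2A] by blast
    hence cl: "c < lam2" using c2 by simp
    obtain d where d: "d > 0" "\<forall>m\<in>I. \<bar>m - c\<bar> < d \<longrightarrow> m \<in> Bset" using openB[OF cB] by blast
    define m where "m = min (c + d/2) lam2"
    have "m \<in> I" "\<bar>m - c\<bar> < d" "c < m" using c1 cl d(1) by (auto simp: m_def I_def)
    hence "m \<in> Bset" "c < m" using d(2) by auto
    moreover have "m \<le> c" unfolding c_def by (rule cSup_upper[OF _ bdd]) (use calculation in blast)
    ultimately show False by simp
  qed
  have cA: "c \<notin> Aset"
  proof
    assume cA: "c \<in> Aset"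
    obtain d where d: "d > 0" "\<forall>m\<in>I. \<bar>m - c\<bar> < d \<longrightarrow> m \<in> Aset" using openA[OF cA] by blast
    have "c - d < Sup Bset" using d(1) by (simp add: c_def)
    then obtain b where b: "b \<in> Bset" "c - d < b" using less_cSup_iff[OF Bne bdd] by blast
    have "b \<le> c" unfolding c_def by (rule cSup_upper[OF b(1) bdd])
    hence "\<bar>b - c\<bar> < d" using b(2) by simp
    moreover have "b \<in> I" using b(1) BI by blast
    ultimately have "b \<in> Aset" using d(2) by blast
    thus False using disj b(1) by blast
  qed
  have "c \<noteq> lam1" using l1B cB by blast
  hence lc: "lam1 < c" using c1 by simp
  have "c \<noteq> lam2" using l2A cA by blast
  hence cl: "c < lam2" using c2 by simp
  have sand: "- pi - h t \<le> Y c t \<and> Y c t \<le> - pi + h t" if "T1 \<le> t" for t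
  proof -
    have "\<not> 0 < Y c t + pi - h t" using cA cI that by (auto simp: Aset_def)
    moreover have "\<not> 0 < - (Y c t + pi + h t)" using cB cI that by (auto simp: Bset_def)
    ultimately show ?thesis by simp
  qed
  have "(Y c \<longlongrightarrow> - pi) at_top"
  proof (rule tendsto_sandwich[where f="\<lambda>t. - pi - h t" and h="\<lambda>t. - pi + h t"])
    show "eventually (\<lambda>t. - pi - h t \<le> Y c t) at_top"
      using eventually_ge_at_top[of T1] by eventually_elim (use sand in blast)
    show "eventually (\<lambda>t. Y c t \<le> - pi + h t) at_top"
      using eventually_ge_at_top[of T1] by eventually_elim (use sand in blast)
    have "((\<lambda>t. - pi - h t) \<longlongrightarrow> - pi - 0) at_top" by (intro tendsto_intros hlim)
    thus "((\<lambda>t. - pi - h t) \<longlongrightarrow> - pi) at_top" by simp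
    have "((\<lambda>t. - pi + h t) \<longlongrightarrow> - pi + 0) at_top" by (intro tendsto_intros hlim)
    thus "((\<lambda>t. - pi + h t) \<longlongrightarrow> - pi) at_top" by simp
  qed
  hence "saddles_connector a E c" using connector_of[OF aE conjunct1[OF YP[of c]] conjunct2[OF YP[of c]]] by blast
  thus ?thesis using lc cl by blast
qed

end

theorem corollary1:
  fixes a E lam1 lam2 :: real and k1 k2 :: int
  assumes "0 < a" "a < 1/2" "0 \<le> E" "E \<le> 1"
    and "lam1 < lam2" "lam2 < 0"
    and "has_corridor a E lam1 k1" "k1 \<ge> 1"
    and "has_corridor a E lam2 k2" "k2 = 0"
  shows "\<exists>lam. lam1 < lam \<and> lam < lam2 \<and> saddles_connector a E lam"
proof -
  note aE = assms(1-4)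
  obtain y1 where y1: "sol a E lam1 y1" "(y1 \<longlongrightarrow> 0) at_bot" using unstable_exists[OF aE] by blast
  obtain y2 where y2: "sol a E lam2 y2" "(y2 \<longlongrightarrow> 0) at_bot" using unstable_exists[OF aE] by blast
  have t1: "(y1 \<longlongrightarrow> - 2 * pi * of_int k1) at_top" by (rule corridor_lim[OF aE y1 assms(7)])
  have "(y2 \<longlongrightarrow> - 2 * pi * of_int k2) at_top" by (rule corridor_lim[OF aE y2 assms(9)])
  hence t2: "(y2 \<longlongrightarrow> 0) at_top" using assms(10) by simp
  show ?thesis by (rule main[OF aE assms(5,6) y1 t1 assms(8) y2 t2])
qed


end
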